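(* Let $T\in\mathbb{B}(\mathscr{H})$ and let $x\in\mathscr{H}$ be a unit vector. Then \[ \left|\langle |T||T^*|x,x\rangle-\langle |T|x,x\rangle\langle |T^*|x,x\rangle\right|\le \||T|x\|\,\||T^*|x\|-|\langle Tx,x\rangle|^{2}. \]
   Context: $\mathbb{B}(\mathscr{H})$ is the algebra of bounded operators on a complex Hilbert space $\mathscr{H}$, and $|T|=(T^*T)^{1/2}$, $|T^*|=(TT^* )^{1/2}$. *)

theory Defs
  imports "HOL-Analysis.Analysis"
begin

text \<open>Complex Hilbert spaces are not available in the distribution libraries, so we
introduce them as a type class: a (real) Banach space carrying a complex scalar
multiplication compatible with the real one, and a complex inner product
(linear in the first argument, conjugate-linear in the second) inducing the norm.\<close>

class chilbert = real_normed_vector + complete_space +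
  fixes scaleC :: "complex \<Rightarrow> 'a \<Rightarrow> 'a"
    and cinner :: "'a \<Rightarrow> 'a \<Rightarrow> complex"
  assumes scaleC_add_right: "scaleC a (x + y) = scaleC a x + scaleC a y"
    and scaleC_add_left: "scaleC (a + b) x = scaleC a x + scaleC b x"
    and scaleC_scaleC: "scaleC a (scaleC b x) = scaleC (a * b) x"
    and scaleC_one: "scaleC 1 x = x"
    and scaleR_scaleC: "scaleR r x = scaleC (complex_of_real r) x"
    and cinner_commute: "cinner x y = cnj (cinner y x)"
    and cinner_add_left: "cinner (x + y) z = cinner x z + cinner y z"
    and cinner_scaleC_left: "cinner (scaleC a x) y = a * cinner x y"
    and cinner_ge_zero: "0 \<le> Re (cinner x x)"
    and cinner_eq_zero_iff: "cinner x x = 0 \<longleftrightarrow> x = 0"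
    and norm_eq_sqrt_cinner: "norm x = sqrt (Re (cinner x x))"

definition bounded_clinear :: "('a::chilbert \<Rightarrow> 'b::chilbert) \<Rightarrow> bool" where
  "bounded_clinear T \<longleftrightarrow>
     (\<forall>x y. T (x + y) = T x + T y) \<and>
     (\<forall>a x. T (scaleC a x) = scaleC a (T x)) \<and>
     (\<exists>K. \<forall>x. norm (T x) \<le> K * norm x)"

definition adj :: "('a::chilbert \<Rightarrow> 'a) \<Rightarrow> ('a \<Rightarrow> 'a)" where
  "adj T = (THE S. \<forall>x y. cinner (T x) y = cinner x (S y))"

definition positive_op :: "('a::chilbert \<Rightarrow> 'a) \<Rightarrow> bool" where
  "positive_op S \<longleftrightarrow> bounded_clinear S \<and>
     (\<forall>x. Im (cinner (S x) x) = 0 \<and> 0 \<le> Re (cinner (S x) x))"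

definition op_sqrt :: "('a::chilbert \<Rightarrow> 'a) \<Rightarrow> ('a \<Rightarrow> 'a)" where
  "op_sqrt A = (THE S. positive_op S \<and> S \<circ> S = A)"

text \<open>|T| = (T*T)^(1/2).  Note |T*| = op_abs (adj T) = (TT*)^(1/2).\<close>
definition op_abs :: "('a::chilbert \<Rightarrow> 'a) \<Rightarrow> ('a \<Rightarrow> 'a)" where
  "op_abs T = op_sqrt (adj T \<circ> T)"

end

theory Submission
  imports Defs
begin

lemma scaleC_zero_left[simp]: "scaleC 0 (x::'a::chilbert) = 0"
  using scaleR_scaleC[of 0 x] by simp

lemma scaleC_minus1: "scaleC (-1) (x::'a::chilbert) = - x"
  using scaleR_scaleC[of "-1" x] by simp

lemma scaleC_zero_right[simp]: "scaleC a (0::'a::chilbert) = 0"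
  using scaleC_add_right[of a 0 0] by simp

lemma cinner_zero_left[simp]: "cinner (0::'a::chilbert) y = 0"
  using cinner_scaleC_left[of 0 0 y] by simp

lemma cinner_zero_right[simp]: "cinner (y::'a::chilbert) 0 = 0"
  using cinner_commute[of y 0] by simp

lemma cinner_add_right: "cinner (x::'a::chilbert) (y + z) = cinner x y + cinner x z"
  by (metis cinner_add_left cinner_commute complex_cnj_add)

lemma cinner_scaleC_right: "cinner (x::'a::chilbert) (scaleC a y) = cnj a * cinner x y"
  by (metis cinner_commute cinner_scaleC_left complex_cnj_mult)

lemma cinner_minus_left: "cinner (- x::'a::chilbert) y = - cinner x y"
  using cinner_scaleC_left[of "-1" x y] by (simp add: scaleC_minus1)

lemma cinner_minus_right: "cinner (x::'a::chilbert) (- y) = - cinner x y"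
  by (metis cinner_commute cinner_minus_left complex_cnj_minus)

lemma cinner_diff_left: "cinner (x - y::'a::chilbert) z = cinner x z - cinner y z"
  using cinner_add_left[of x "-y" z] by (simp add: cinner_minus_left)

lemma cinner_diff_right: "cinner (x::'a::chilbert) (y - z) = cinner x y - cinner x z"
  using cinner_add_right[of x y "-z"] by (simp add: cinner_minus_right)

lemma cinner_scaleR_left: "cinner (scaleR r x::'a::chilbert) y = complex_of_real r * cinner x y"
  by (simp add: scaleR_scaleC cinner_scaleC_left)

lemma cinner_scaleR_right: "cinner (x::'a::chilbert) (scaleR r y) = complex_of_real r * cinner x y"
  by (simp add: scaleR_scaleC cinner_scaleC_right)

lemma Im_cinner_self[simp]: "Im (cinner (x::'a::chilbert) x) = 0"
proof -
  have "cinner x x = cnj (cinner x x)" by (rule cinner_commute)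
  then have "Im (cinner x x) = Im (cnj (cinner x x))" by simp
  then show ?thesis by simp
qed

lemma Re_cinner_self: "Re (cinner (x::'a::chilbert) x) = (norm x)^2"
  using norm_eq_sqrt_cinner[of x] cinner_ge_zero[of x] by simp

lemma cinner_self: "cinner (x::'a::chilbert) x = complex_of_real ((norm x)^2)"
  by (simp add: complex_eq_iff Re_cinner_self)

lemma norm_scaleC: "norm (scaleC a (x::'a::chilbert)) = cmod a * norm x"
proof -
  have "(norm (scaleC a x))^2 = (cmod a * norm x)^2"
  proof -
    have "complex_of_real ((norm (scaleC a x))^2) = cinner (scaleC a x) (scaleC a x)"
      by (simp add: cinner_self)
    also have "\<dots> = (a * cnj a) * cinner x x"
      by (simp add: cinner_scaleC_left cinner_scaleC_right)
    also have "\<dots> = complex_of_real ((cmod a * norm x)^2)"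
    proof -
      have "a * cnj a = complex_of_real ((cmod a)^2)" by (rule complex_norm_square[symmetric])
      then show ?thesis by (simp add: cinner_self power_mult_distrib)
    qed
    finally show ?thesis by (simp only: of_real_eq_iff)
  qed
  then show ?thesis by (simp add: power2_eq_iff_nonneg)
qed

definition clin :: "('a::chilbert \<Rightarrow> 'b::chilbert) \<Rightarrow> bool" where
  "clin f \<longleftrightarrow> (\<forall>x y. f (x + y) = f x + f y) \<and> (\<forall>a x. f (scaleC a x) = scaleC a (f x))"

lemma clin_add: "clin f \<Longrightarrow> f (x + y) = f x + f y"
  by (simp add: clin_def)
lemma clin_scaleC: "clin f \<Longrightarrow> f (scaleC a x) = scaleC a (f x)"
  by (simp add: clin_def)
lemma clin_zero: "clin f \<Longrightarrow> f 0 = 0"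
  using clin_add[of f 0 0] by simp
lemma clin_minus: "clin f \<Longrightarrow> f (- x) = - f x"
  using clin_scaleC[of f "-1" x] by (simp add: scaleC_minus1)
lemma clin_diff: "clin f \<Longrightarrow> f (x - y) = f x - f y"
  using clin_add[of f x "-y"] clin_minus[of f y] by simp
lemma clin_scaleR: "clin f \<Longrightarrow> f (scaleR r x) = scaleR r (f x)"
  by (simp add: scaleR_scaleC clin_scaleC)

lemma bounded_clinear_clin: "bounded_clinear T \<Longrightarrow> clin T"
  by (simp add: bounded_clinear_def clin_def)

lemma bounded_clinear_bound:
  fixes T :: "'a::chilbert \<Rightarrow> 'b::chilbert"
  assumes "bounded_clinear T" obtains K where "K > 0" "\<And>x. norm (T x) \<le> K * norm x"
proof -
  from assms obtain K where K: "\<And>x. norm (T x) \<le> K * norm x"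
    by (auto simp: bounded_clinear_def)
  show ?thesis
  proof (rule that[of "max K 1"])
    fix x :: 'a have "K * norm x \<le> max K 1 * norm x" by (simp add: mult_right_mono)
    then show "norm (T x) \<le> max K 1 * norm x" using K[of x] by linarith
  qed simp
qed

lemma bounded_clinear_intro: "clin T \<Longrightarrow> (\<And>x. norm (T x) \<le> K * norm x) \<Longrightarrow> bounded_clinear T"
  by (auto simp: bounded_clinear_def clin_def)

lemma bounded_clinear_linear: "bounded_clinear T \<Longrightarrow> bounded_linear T"
proof -
  assume a: "bounded_clinear T"
  then obtain K where "\<And>x. norm (T x) \<le> K * norm x" using bounded_clinear_bound[OF a] by blast
  then show ?thesis using bounded_clinear_clin[OF a]
    by (intro bounded_linear_intro[where K=K]) (auto simp: clin_add clin_scaleR mult.commute)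
qed

definition pos :: "('a::chilbert \<Rightarrow> 'a) \<Rightarrow> bool" where
  "pos S \<longleftrightarrow> (\<forall>x. Im (cinner (S x) x) = 0 \<and> 0 \<le> Re (cinner (S x) x))"

definition herm :: "('a::chilbert \<Rightarrow> 'a) \<Rightarrow> bool" where
  "herm S \<longleftrightarrow> (\<forall>x y. cinner (S x) y = cinner x (S y))"

lemma positive_op_iff: "positive_op S \<longleftrightarrow> bounded_clinear S \<and> pos S"
  by (simp add: positive_op_def pos_def)

lemma herm_of_pos:
  assumes c: "clin S" and p: "pos S"
  shows "herm S"
  unfolding herm_def
proof (intro allI)
  fix x y
  define u where "u = cinner (S x) y"
  define v where "v = cinner (S y) x"
  have i1: "Im (cinner (S (x + y)) (x + y)) = 0" using p by (simp add: pos_def)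
  have e1: "cinner (S (x + y)) (x + y) = cinner (S x) x + u + v + cinner (S y) y"
    by (simp add: clin_add[OF c] cinner_add_left cinner_add_right u_def v_def)
  have ix: "Im (cinner (S x) x) = 0" and iy: "Im (cinner (S y) y) = 0" using p by (auto simp: pos_def)
  have A: "Im u + Im v = 0" using i1 e1 ix iy by simp
  have i2: "Im (cinner (S (x + scaleC \<i> y)) (x + scaleC \<i> y)) = 0" using p by (simp add: pos_def)
  have e2: "cinner (S (x + scaleC \<i> y)) (x + scaleC \<i> y)
      = cinner (S x) x - \<i> * u + \<i> * v + cinner (S y) y"
    by (simp add: clin_add[OF c] clin_scaleC[OF c] cinner_add_left cinner_add_right
        cinner_scaleC_left cinner_scaleC_right u_def v_def algebra_simps)
  have B: "Re v - Re u = 0" using i2 e2 ix iy by simp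
  have "cinner x (S y) = cnj v" by (simp add: v_def cinner_commute[of x])
  also have "\<dots> = u" using A B by (simp add: complex_eq_iff)
  finally show "cinner (S x) y = cinner x (S y)" by (simp add: u_def)
qed

lemma discr_lemma:
  fixes a b q :: real
  assumes "q \<ge> 0" "b \<ge> 0" "\<And>t. 0 \<le> a - 2 * t * q + t^2 * q * b"
  shows "q \<le> a * b"
proof (cases "q = 0")
  case True
  have "0 \<le> a" using assms(3)[of 0] by simp
  then show ?thesis using True assms(2) by simp
next
  case False
  then have q: "q > 0" using assms(1) by simp
  show ?thesis
  proof (cases "b > 0")
    case True
    have "0 \<le> a - 2 * (1/b) * q + (1/b)^2 * q * b" by (rule assms(3))
    also have "\<dots> = a - q / b" using True by (simp add: field_simps power2_eq_square)
    finally show ?thesis using True by (simp add: field_simps)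
  next
    case False
    have "0 \<le> a - 2 * ((a+1)/(2*q)) * q + ((a+1)/(2*q))^2 * q * b" by (rule assms(3))
    moreover have "((a+1)/(2*q))^2 * q * b \<le> 0"
      using False q assms(2) by simp
    moreover have "2 * ((a+1)/(2*q)) * q = a + 1" using q by simp
    ultimately show ?thesis by linarith
  qed
qed

lemma gen_cs:
  assumes c: "clin S" and p: "pos S"
  shows "(cmod (cinner (S x) y))^2 \<le> Re (cinner (S x) x) * Re (cinner (S y) y)"
proof -
  have h: "herm S" using herm_of_pos[OF c p] .
  define u where "u = cinner (S x) y"
  define a where "a = Re (cinner (S x) x)"
  define b where "b = Re (cinner (S y) y)"
  have ax: "cinner (S x) x = complex_of_real a" using p by (simp add: pos_def a_def complex_eq_iff)
  have by': "cinner (S y) y = complex_of_real b" using p by (simp add: pos_def b_def complex_eq_iff)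
  have syx: "cinner (S y) x = cnj u"
    using h by (simp add: herm_def u_def cinner_commute[of y])
  have uu: "u * cnj u = complex_of_real ((cmod u)^2)" by (rule complex_norm_square[symmetric])
  show ?thesis unfolding u_def[symmetric] a_def[symmetric] b_def[symmetric]
  proof (rule discr_lemma)
    show "0 \<le> (cmod u)^2" by simp
    show "0 \<le> b" using p by (simp add: pos_def b_def)
    fix t :: real
    define w where "w = x - scaleC (complex_of_real t * u) y"
    have "cinner (S w) w = complex_of_real a - cnj (complex_of_real t * u) * u
         - (complex_of_real t * u) * cnj u
         + (complex_of_real t * u) * cnj (complex_of_real t * u) * complex_of_real b"
      unfolding w_def
      by (simp add: clin_diff[OF c] clin_scaleC[OF c] cinner_diff_left cinner_diff_right
          cinner_scaleC_left cinner_scaleC_right ax by' syx u_def[symmetric] algebra_simps)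
    also have "\<dots> = complex_of_real (a - 2 * t * (cmod u)^2 + t^2 * (cmod u)^2 * b)"
    proof -
      have e1: "cnj (complex_of_real t * u) * u = complex_of_real (t * (cmod u)^2)"
        using uu by (simp add: mult.commute mult.left_commute)
      have e2: "(complex_of_real t * u) * cnj u = complex_of_real (t * (cmod u)^2)"
        using uu by (simp add: mult.assoc)
      have e3: "(complex_of_real t * u) * cnj (complex_of_real t * u) * complex_of_real b
          = complex_of_real (t^2 * (cmod u)^2 * b)"
        using uu by (simp add: power2_eq_square mult.commute mult.left_commute)
      show ?thesis unfolding e1 e2 e3 by simp
    qed
    finally have "Re (cinner (S w) w) = a - 2 * t * (cmod u)^2 + t^2 * (cmod u)^2 * b" by simp
    moreover have "0 \<le> Re (cinner (S w) w)" using p by (simp add: pos_def)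
    ultimately show "0 \<le> a - 2 * t * (cmod u)^2 + t^2 * (cmod u)^2 * b" by simp
  qed
qed

lemma clin_id: "clin (\<lambda>x. x)" by (simp add: clin_def)
lemma pos_id: "pos (\<lambda>x::'a::chilbert. x)" by (simp add: pos_def cinner_ge_zero)

lemma cauchy_schwarz: "cmod (cinner (x::'a::chilbert) y) \<le> norm x * norm y"
proof -
  have "(cmod (cinner x y))^2 \<le> Re (cinner x x) * Re (cinner y y)"
    using gen_cs[OF clin_id pos_id, of x y] by simp
  also have "\<dots> = (norm x * norm y)^2" by (simp add: Re_cinner_self power_mult_distrib)
  finally show ?thesis by (rule power2_le_imp_le) simp
qed

lemma bounded_linear_cinner_left: "bounded_linear (\<lambda>u::'a::chilbert. cinner u y)"
  by (rule bounded_linear_intro[where K="norm y"])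
    (auto simp: cinner_add_left cinner_scaleR_left scaleR_conv_of_real cauchy_schwarz)

lemma bounded_linear_cinner_right: "bounded_linear (\<lambda>u::'a::chilbert. cinner y u)"
proof (rule bounded_linear_intro[where K="norm y"])
  fix u v :: 'a and r :: real
  show "cinner y (u + v) = cinner y u + cinner y v" by (rule cinner_add_right)
  show "cinner y (scaleR r u) = scaleR r (cinner y u)" by (simp add: cinner_scaleR_right scaleR_conv_of_real)
  show "norm (cinner y u) \<le> norm u * norm y" using cauchy_schwarz[of y u] by (simp add: mult.commute)
qed

lemma tendsto_cinner_left: "(f \<longlongrightarrow> l) F \<Longrightarrow> ((\<lambda>n. cinner (f n) (y::'a::chilbert)) \<longlongrightarrow> cinner l y) F"
  using bounded_linear.tendsto[OF bounded_linear_cinner_left] .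

lemma tendsto_cinner_right: "(f \<longlongrightarrow> l) F \<Longrightarrow> ((\<lambda>n. cinner (y::'a::chilbert) (f n)) \<longlongrightarrow> cinner y l) F"
  using bounded_linear.tendsto[OF bounded_linear_cinner_right] .

lemma bounded_linear_scaleC: "bounded_linear (\<lambda>x::'a::chilbert. scaleC a x)"
  by (rule bounded_linear_intro[where K="cmod a"])
    (auto simp: scaleC_add_right scaleR_scaleC scaleC_scaleC norm_scaleC mult.commute)

lemma cinner_eq_zero_all: "(\<And>x. cinner x (u::'a::chilbert) = cinner x v) \<Longrightarrow> u = v"
proof -
  assume "\<And>x. cinner x u = cinner x v"
  then have "cinner (u - v) (u - v) = 0" by (simp add: cinner_diff_right cinner_diff_left)
  then show "u = v" by (simp add: cinner_eq_zero_iff)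
qed

lemma expand_sub_scale:
  fixes z u :: "'a::chilbert"
  defines "c \<equiv> cinner z u"
  shows "Re (cinner (z - scaleC (complex_of_real t * c) u) (z - scaleC (complex_of_real t * c) u))
       = (norm z)^2 - 2 * t * (cmod c)^2 + t^2 * (cmod c)^2 * (norm u)^2"
proof -
  have uz: "cinner u z = cnj c" by (simp add: c_def cinner_commute[of u])
  have uu: "c * cnj c = complex_of_real ((cmod c)^2)" by (rule complex_norm_square[symmetric])
  have "cinner (z - scaleC (complex_of_real t * c) u) (z - scaleC (complex_of_real t * c) u)
     = cinner z z - cnj (complex_of_real t * c) * c
         - (complex_of_real t * c) * cnj c
         + (complex_of_real t * c) * cnj (complex_of_real t * c) * cinner u u"
    by (simp add: cinner_diff_left cinner_diff_right
          cinner_scaleC_left cinner_scaleC_right uz c_def[symmetric] algebra_simps)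
  also have "\<dots> = complex_of_real ((norm z)^2 - 2 * t * (cmod c)^2 + t^2 * (cmod c)^2 * (norm u)^2)"
  proof -
    have e1: "cnj (complex_of_real t * c) * c = complex_of_real (t * (cmod c)^2)"
      using uu by (simp add: mult.commute mult.left_commute)
    have e2: "(complex_of_real t * c) * cnj c = complex_of_real (t * (cmod c)^2)"
      using uu by (simp add: mult.assoc)
    have e3: "(complex_of_real t * c) * cnj (complex_of_real t * c) * cinner u u
          = complex_of_real (t^2 * (cmod c)^2 * (norm u)^2)"
      using uu by (simp add: power2_eq_square mult.commute mult.left_commute cinner_self)
    show ?thesis unfolding e1 e2 e3 by (simp add: cinner_self)
  qed
  finally show ?thesis by simp
qed

lemma parallelogram:
  fixes a b :: "'a::chilbert"
  shows "(norm (a + b))^2 + (norm (a - b))^2 = 2 * (norm a)^2 + 2 * (norm b)^2"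
proof -
  have "complex_of_real ((norm (a + b))^2 + (norm (a - b))^2) = cinner (a+b) (a+b) + cinner (a-b) (a-b)"
    by (simp add: cinner_self)
  also have "\<dots> = 2 * cinner a a + 2 * cinner b b"
    by (simp add: cinner_add_left cinner_add_right cinner_diff_left cinner_diff_right)
  also have "\<dots> = complex_of_real (2 * (norm a)^2 + 2 * (norm b)^2)"
    by (simp add: cinner_self)
  finally show ?thesis by (simp only: of_real_eq_iff)
qed

definition csubspace :: "'a::chilbert set \<Rightarrow> bool" where
  "csubspace M \<longleftrightarrow> 0 \<in> M \<and> (\<forall>u v. u \<in> M \<longrightarrow> v \<in> M \<longrightarrow> u + v \<in> M)
     \<and> (\<forall>a u. u \<in> M \<longrightarrow> scaleC a u \<in> M)"

lemma csubspace_diff: "csubspace M \<Longrightarrow> u \<in> M \<Longrightarrow> v \<in> M \<Longrightarrow> u - v \<in> M"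
  unfolding csubspace_def by (metis diff_conv_add_uminus scaleC_minus1)

lemma csubspace_scaleR: "csubspace M \<Longrightarrow> u \<in> M \<Longrightarrow> scaleR r u \<in> M"
  unfolding csubspace_def by (simp add: scaleR_scaleC)

lemma projection_exists:
  fixes M :: "'a::chilbert set"
  assumes cl: "closed M" and sub: "csubspace M"
  shows "\<exists>m\<in>M. \<forall>u\<in>M. cinner (x - m) u = 0"
proof -
  define D where "D = (\<lambda>m. norm (x - m)) ` M"
  define d where "d = Inf D"
  have ne: "D \<noteq> {}" using sub by (auto simp: D_def csubspace_def)
  have bdd: "bdd_below D" by (auto simp: D_def bdd_below_def intro!: exI[of _ 0])
  have dle: "d \<le> norm (x - m)" if "m \<in> M" for m
    unfolding d_def by (rule cInf_lower) (use that bdd in \<open>auto simp: D_def\<close>)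
  have d0: "0 \<le> d" unfolding d_def by (rule cInf_greatest[OF ne]) (auto simp: D_def)
  have "\<exists>m\<in>M. norm (x - m) < d + 1 / real (Suc n)" for n
  proof -
    have "Inf D < d + 1 / real (Suc n)" by (simp add: d_def)
    then show ?thesis using cInf_less_iff[OF ne bdd] by (auto simp: D_def)
  qed
  then obtain mm where mmM: "\<And>n. mm n \<in> M" and mmd: "\<And>n. norm (x - mm n) < d + 1 / real (Suc n)"
    by metis
  have sq: "(norm (x - mm n))^2 \<le> d^2 + (2*d+1) / real (Suc n)" for n
  proof -
    have "(norm (x - mm n))^2 \<le> (d + 1 / real (Suc n))^2"
      using mmd[of n] by (intro power_mono) auto
    also have "\<dots> = d^2 + 2 * d / real (Suc n) + 1 / real (Suc n) * (1 / real (Suc n))"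
      by (simp add: power2_eq_square algebra_simps add_divide_distrib)
    also have "1 / real (Suc n) * (1 / real (Suc n)) \<le> 1 / real (Suc n)"
      by (intro mult_left_le_one_le) auto
    finally show ?thesis by (simp add: add_divide_distrib)
  qed
  have dist_bound: "(norm (mm n - mm k))^2 \<le> 2 * (2*d+1) / real (Suc n) + 2 * (2*d+1) / real (Suc k)" for n k
  proof -
    have mid: "scaleR (1/2) (mm n + mm k) \<in> M"
      using sub mmM by (simp add: csubspace_def csubspace_scaleR)
    have "(norm ((x - mm n) + (x - mm k)))^2 + (norm ((x - mm n) - (x - mm k)))^2
       = 2 * (norm (x - mm n))^2 + 2 * (norm (x - mm k))^2" by (rule parallelogram)
    moreover have "(x - mm n) + (x - mm k) = scaleR 2 (x - scaleR (1/2) (mm n + mm k))"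
      by (simp add: algebra_simps scaleR_2)
    moreover have "(x - mm n) - (x - mm k) = mm k - mm n" by simp
    ultimately have e: "4 * (norm (x - scaleR (1/2) (mm n + mm k)))^2 + (norm (mm n - mm k))^2
       = 2 * (norm (x - mm n))^2 + 2 * (norm (x - mm k))^2"
      by (simp add: power_mult_distrib norm_minus_commute)
    have "d^2 \<le> (norm (x - scaleR (1/2) (mm n + mm k)))^2"
      using dle[OF mid] d0 by (intro power_mono) auto
    then show ?thesis using e sq[of n] sq[of k] by linarith
  qed
  have "Cauchy mm"
  proof (rule metric_CauchyI)
    fix e :: real assume e: "e > 0"
    obtain N where N: "4 * (2*d+1) / e^2 < real N" using reals_Archimedean2 by blast
    have Npos: "0 < real (Suc N)" by simp
    have key: "4 * (2*d+1) / real (Suc N) < e^2"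
    proof -
      have "4 * (2*d+1) < e^2 * real N" using N e by (simp add: field_simps)
      also have "\<dots> \<le> e^2 * real (Suc N)" by (intro mult_left_mono) auto
      finally have "4 * (2*d+1) < e^2 * real (Suc N)" .
      then show ?thesis using Npos by (simp add: field_simps)
    qed
    show "\<exists>M. \<forall>m\<ge>M. \<forall>n\<ge>M. dist (mm m) (mm n) < e"
    proof (intro exI allI impI)
      fix m n assume mN: "m \<ge> N" and nN: "n \<ge> N"
      have a: "2 * (2*d+1) / real (Suc m) \<le> 2 * (2*d+1) / real (Suc N)"
        using mN d0 by (intro divide_left_mono) auto
      have b: "2 * (2*d+1) / real (Suc n) \<le> 2 * (2*d+1) / real (Suc N)"
        using nN d0 by (intro divide_left_mono) auto
      have cc: "2 * (2*d+1) / real (Suc N) + 2 * (2*d+1) / real (Suc N) = 4 * (2*d+1) / real (Suc N)"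
        by (simp add: add_divide_distrib[symmetric])
      have "(norm (mm m - mm n))^2 < e^2"
        using dist_bound[of m n] a b key cc by linarith
      then have "(dist (mm m) (mm n))^2 < e^2" by (simp add: dist_norm)
      then show "dist (mm m) (mm n) < e" using e by (simp add: power_less_imp_less_base)
    qed
  qed
  then obtain m where lim: "mm \<longlonglongrightarrow> m" using Cauchy_convergent_iff convergent_def by blast
  have mM: "m \<in> M" using closed_sequentially[OF cl] mmM lim by blast
  have "norm (x - m) \<le> d"
  proof (rule LIMSEQ_le)
    show "(\<lambda>n. norm (x - mm n)) \<longlonglongrightarrow> norm (x - m)"
      by (intro tendsto_intros lim)
    show "(\<lambda>n. d + 1 / real (Suc n)) \<longlonglongrightarrow> d"
      using tendsto_add[OF tendsto_const LIMSEQ_inverse_real_of_nat, of d] by (simp add: inverse_eq_divide)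
    show "\<exists>N. \<forall>n\<ge>N. norm (x - mm n) \<le> d + 1 / real (Suc n)" using mmd less_imp_le by blast
  qed
  then have best: "norm (x - m) \<le> norm (x - v)" if "v \<in> M" for v using dle[OF that] by linarith
  show ?thesis
  proof (intro bexI[OF _ mM] ballI)
    fix u assume uM: "u \<in> M"
    define z where "z = x - m"
    define c where "c = cinner z u"
    define t where "t = 1 / ((norm u)^2 + 1)"
    have t0: "t > 0" unfolding t_def by (simp add: add_nonneg_pos)
    have tu: "t * (norm u)^2 < 1"
    proof -
      have p: "0 < (norm u)^2 + 1" by (simp add: add_nonneg_pos)
      then show ?thesis by (simp add: t_def pos_divide_less_eq)
    qed
    have inM: "m + scaleC (complex_of_real t * c) u \<in> M" using sub mM uM by (simp add: csubspace_def)
    have "(norm z)^2 \<le> (norm (z - scaleC (complex_of_real t * c) u))^2"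
      using best[OF inM] by (simp add: z_def diff_diff_eq power_mono)
    also have "\<dots> = (norm z)^2 - 2 * t * (cmod c)^2 + t^2 * (cmod c)^2 * (norm u)^2"
      using expand_sub_scale[where z=z and u=u and t=t] by (simp add: c_def Re_cinner_self)
    finally have "0 \<le> t * ((cmod c)^2 * (t * (norm u)^2 - 2))"
      by (simp add: algebra_simps power2_eq_square)
    then have "0 \<le> (cmod c)^2 * (t * (norm u)^2 - 2)" using t0 by (simp add: zero_le_mult_iff)
    moreover have "t * (norm u)^2 - 2 < 0" using tu by simp
    ultimately have "(cmod c)^2 \<le> 0"
    proof -
      assume A: "0 \<le> (cmod c)^2 * (t * (norm u)^2 - 2)" and B: "t * (norm u)^2 - 2 < 0"
      show ?thesis
      proof (rule ccontr)
        assume "\<not> (cmod c)^2 \<le> 0"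
        then have "(cmod c)^2 > 0" by simp
        then have "(cmod c)^2 * (t * (norm u)^2 - 2) < 0" using B by (rule mult_pos_neg)
        then show False using A by simp
      qed
    qed
    then show "cinner (x - m) u = 0" by (simp add: c_def z_def)
  qed
qed

lemma riesz:
  fixes f :: "'a::chilbert \<Rightarrow> complex"
  assumes add: "\<And>x y. f (x + y) = f x + f y"
    and hom: "\<And>a x. f (scaleC a x) = a * f x"
    and bnd: "\<And>x. cmod (f x) \<le> K * norm x"
  shows "\<exists>y. \<forall>x. f x = cinner x y"
proof (cases "\<forall>x. f x = 0")
  case True
  then show ?thesis by (intro exI[of _ 0]) simp
next
  case False
  then obtain x0 where fx0: "f x0 \<noteq> 0" by blast
  define N where "N = {x. f x = 0}"
  have f0: "f 0 = 0" using add[of 0 0] by simp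
  have bl: "bounded_linear f"
    by (rule bounded_linear_intro[where K=K])
      (auto simp: add scaleR_scaleC hom scaleR_conv_of_real bnd mult.commute)
  have "closed {x. f x = (\<lambda>_. 0) x}"
    by (intro closed_Collect_eq linear_continuous_on bl continuous_on_const)
  then have cl: "closed N" by (simp add: N_def)
  have sub: "csubspace N" by (simp add: N_def csubspace_def f0 add hom)
  obtain m where mN: "m \<in> N" and orth: "\<And>u. u \<in> N \<Longrightarrow> cinner (x0 - m) u = 0"
    using projection_exists[OF cl sub, of x0] by blast
  define z where "z = x0 - m"
  have fm: "f m = 0" using mN by (simp add: N_def)
  have fz: "f z = f x0" using add[of "x0 - m" m] fm by (simp add: z_def)
  have zz: "cinner z z \<noteq> 0"
  proof
    assume "cinner z z = 0"
    then have "z = 0" by (simp add: cinner_eq_zero_iff)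
    then show False using fz fx0 f0 by simp
  qed
  show ?thesis
  proof (intro exI allI)
    fix x
    define w where "w = scaleC (f x) z - scaleC (f z) x"
    have "f w = 0"
      using add[of "scaleC (f x) z" "- scaleC (f z) x"] hom[of "-1"] by (simp add: w_def hom scaleC_minus1)
    then have "cinner z w = 0" using orth by (simp add: N_def z_def)
    then have "cinner w z = 0" by (simp add: cinner_commute[of w])
    then have e: "f x * cinner z z = f z * cinner x z"
      by (simp add: w_def cinner_diff_left cinner_scaleC_left)
    have czz: "cnj (cinner z z) = cinner z z" by (simp add: cinner_self)
    show "f x = cinner x (scaleC (cnj (f z / cinner z z)) z)"
      using e zz by (simp add: cinner_scaleC_right czz field_simps)
  qed
qed

lemma adj_exists:
  fixes T :: "'a::chilbert \<Rightarrow> 'a"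
  assumes "bounded_clinear T"
  shows "\<exists>S. \<forall>x y. cinner (T x) y = cinner x (S y)"
proof -
  have c: "clin T" using assms by (rule bounded_clinear_clin)
  obtain K where K: "\<And>x. norm (T x) \<le> K * norm x" using bounded_clinear_bound[OF assms] by blast
  have "\<exists>y'. \<forall>x. cinner (T x) y = cinner x y'" for y
  proof (rule riesz[where K="K * norm y"])
    fix x x' a
    show "cinner (T (x + x')) y = cinner (T x) y + cinner (T x') y" by (simp add: clin_add[OF c] cinner_add_left)
    show "cinner (T (scaleC a x)) y = a * cinner (T x) y" by (simp add: clin_scaleC[OF c] cinner_scaleC_left)
    have "cmod (cinner (T x) y) \<le> norm (T x) * norm y" by (rule cauchy_schwarz)
    also have "\<dots> \<le> K * norm x * norm y" using K[of x] by (simp add: mult_right_mono)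
    finally show "cmod (cinner (T x) y) \<le> K * norm y * norm x" by (simp add: mult_ac)
  qed
  then show ?thesis by metis
qed

lemma adj_char:
  fixes T :: "'a::chilbert \<Rightarrow> 'a"
  assumes "\<forall>x y. cinner (T x) y = cinner x (S y)"
  shows "adj T = S"
  unfolding adj_def
proof (rule the_equality)
  show "\<forall>x y. cinner (T x) y = cinner x (S y)" by fact
  fix S' assume a: "\<forall>x y. cinner (T x) y = cinner x (S' y)"
  show "S' = S"
  proof
    fix y show "S' y = S y" using a assms by (intro cinner_eq_zero_all) metis
  qed
qed

lemma adj_prop:
  fixes T :: "'a::chilbert \<Rightarrow> 'a"
  assumes "bounded_clinear T"
  shows "cinner (T x) y = cinner x (adj T y)"
proof -
  obtain S where S: "\<forall>x y. cinner (T x) y = cinner x (S y)" using adj_exists[OF assms] by blast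
  then show ?thesis using adj_char[OF S] by simp
qed

lemma adj_bounded:
  fixes T :: "'a::chilbert \<Rightarrow> 'a"
  assumes bT: "bounded_clinear T"
  shows "bounded_clinear (adj T)"
proof -
  have c: "clin T" using bT by (rule bounded_clinear_clin)
  obtain K where K: "K > 0" "\<And>x. norm (T x) \<le> K * norm x" using bounded_clinear_bound[OF bT] by blast
  have cl: "clin (adj T)"
    unfolding clin_def
  proof (intro conjI allI)
    fix y1 y2
    show "adj T (y1 + y2) = adj T y1 + adj T y2"
      by (rule cinner_eq_zero_all) (simp add: adj_prop[OF bT, symmetric] cinner_add_right)
    fix a y
    show "adj T (scaleC a y) = scaleC a (adj T y)"
      by (rule cinner_eq_zero_all) (simp add: adj_prop[OF bT, symmetric] cinner_scaleC_right)
  qed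
  show ?thesis
  proof (rule bounded_clinear_intro[OF cl])
    fix y
    have "(norm (adj T y))^2 = Re (cinner (T (adj T y)) y)"
      by (simp add: adj_prop[OF bT] Re_cinner_self)
    also have "\<dots> \<le> cmod (cinner (T (adj T y)) y)" by (rule complex_Re_le_cmod)
    also have "\<dots> \<le> norm (T (adj T y)) * norm y" by (rule cauchy_schwarz)
    also have "\<dots> \<le> K * norm (adj T y) * norm y" using K(2) by (simp add: mult_right_mono)
    finally have h: "norm (adj T y) * norm (adj T y) \<le> norm (adj T y) * (K * norm y)"
      by (simp add: power2_eq_square mult_ac)
    show "norm (adj T y) \<le> K * norm y"
    proof (cases "norm (adj T y) = 0")
      case True then show ?thesis using K by simp
    next
      case False then have "norm (adj T y) > 0" by simp
      then show ?thesis using h by simp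
    qed
  qed
qed

lemma adj_adj:
  fixes T :: "'a::chilbert \<Rightarrow> 'a"
  assumes "bounded_clinear T"
  shows "adj (adj T) = T"
proof (rule adj_char, intro allI)
  fix x y
  have "cinner (adj T x) y = cnj (cinner y (adj T x))" by (rule cinner_commute)
  also have "\<dots> = cnj (cinner (T y) x)" by (simp add: adj_prop[OF assms])
  also have "\<dots> = cinner x (T y)" by (simp add: cinner_commute[of x])
  finally show "cinner (adj T x) y = cinner x (T y)" .
qed

lemma clin_funpow: fixes Q :: "'a::chilbert \<Rightarrow> 'a" assumes "clin Q" shows "clin (Q ^^ k)"
proof (induction k)
  case 0 show ?case by (simp add: clin_def)
next
  case (Suc k) then show ?case using assms by (simp add: clin_def)
qed

lemma herm_funpow: assumes "herm Q" shows "herm (Q ^^ k)"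
proof (induction k)
  case 0 show ?case by (simp add: herm_def)
next
  case (Suc k) then show ?case using assms by (simp add: herm_def funpow_swap1)
qed

lemma pos_funpow:
  assumes c: "clin Q" and p: "pos Q"
  shows "pos (Q ^^ k)"
proof -
  have h: "herm Q" by (rule herm_of_pos[OF c p])
  define m where "m = k div 2"
  have "k = 2 * m \<or> k = Suc (2 * m)" unfolding m_def by presburger
  then show ?thesis
  proof
    assume k: "k = 2 * m"
    have "(Q ^^ k) x = (Q ^^ m) ((Q ^^ m) x)" for x
      by (simp add: k mult_2 funpow_add)
    then have "cinner ((Q ^^ k) x) x = cinner ((Q ^^ m) x) ((Q ^^ m) x)" for x
      using herm_funpow[OF h, of m] by (simp add: herm_def)
    then show ?thesis by (simp add: pos_def cinner_ge_zero)
  next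
    assume k: "k = Suc (2 * m)"
    have "(Q ^^ k) x = (Q ^^ m) (Q ((Q ^^ m) x))" for x
      by (simp add: k mult_2 funpow_add funpow_swap1)
    then have "cinner ((Q ^^ k) x) x = cinner (Q ((Q ^^ m) x)) ((Q ^^ m) x)" for x
      using herm_funpow[OF h, of m] by (simp add: herm_def)
    then show ?thesis using p by (simp add: pos_def)
  qed
qed

lemma pos_add: "pos S \<Longrightarrow> pos R \<Longrightarrow> pos (\<lambda>x. S x + R x)"
  by (simp add: pos_def cinner_add_left)

lemma pos_scale: "pos S \<Longrightarrow> 0 \<le> c \<Longrightarrow> pos (\<lambda>x. scaleR c (S x))"
  by (simp add: pos_def cinner_scaleR_left)

inductive nnp :: "('a::chilbert \<Rightarrow> 'a) \<Rightarrow> ('a \<Rightarrow> 'a) \<Rightarrow> bool" for Q where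
  nnp_zero: "nnp Q (\<lambda>x. 0)"
| nnp_step: "nnp Q S \<Longrightarrow> 0 \<le> c \<Longrightarrow> nnp Q (\<lambda>x. S x + scaleR c ((Q ^^ k) x))"

lemma nnp_clin: assumes cQ: "clin Q" and "nnp Q S" shows "clin S"
  using assms(2)
proof (induction rule: nnp.induct)
  case nnp_zero then show ?case by (simp add: clin_def)
next
  case (nnp_step S c k)
  have "clin (Q ^^ k)" using clin_funpow[OF cQ] .
  then show ?case using nnp_step.IH
    by (simp add: clin_def scaleC_add_right scaleR_scaleC scaleC_scaleC mult.commute algebra_simps)
qed

lemma nnp_pos: assumes cQ: "clin Q" and pQ: "pos Q" and "nnp Q S" shows "pos S"
  using assms(3)
proof (induction rule: nnp.induct)
  case nnp_zero then show ?case by (simp add: pos_def)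
next
  case (nnp_step S c k)
  then show ?case using cQ pQ by (intro pos_add pos_scale pos_funpow) auto
qed

lemma nnp_add: "nnp Q R \<Longrightarrow> nnp Q S \<Longrightarrow> nnp Q (\<lambda>x. S x + R x)"
proof (induction rule: nnp.induct)
  case nnp_zero then show ?case by simp
next
  case (nnp_step R c k)
  have "nnp Q (\<lambda>x. (S x + R x) + scaleR c ((Q ^^ k) x))"
    by (rule nnp.nnp_step[OF nnp_step.IH[OF nnp_step.prems] nnp_step.hyps(2)])
  then show ?case by (simp add: add.assoc)
qed

lemma nnp_scale: "nnp Q S \<Longrightarrow> 0 \<le> c \<Longrightarrow> nnp Q (\<lambda>x. scaleR c (S x))"
proof (induction rule: nnp.induct)
  case nnp_zero then show ?case by (simp add: nnp.nnp_zero)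
next
  case (nnp_step S d k)
  have "nnp Q (\<lambda>x. scaleR c (S x) + scaleR (c * d) ((Q ^^ k) x))"
    using nnp_step by (intro nnp.nnp_step) auto
  then show ?case by (simp add: scaleR_add_right)
qed

lemma nnp_pow: "nnp Q (Q ^^ k)"
  using nnp.nnp_step[OF nnp.nnp_zero, where c=1 and k=k] by simp

lemma nnp_comp_pow: "nnp Q S \<Longrightarrow> nnp Q (\<lambda>x. S ((Q ^^ k) x))"
proof (induction rule: nnp.induct)
  case nnp_zero then show ?case by (simp add: nnp.nnp_zero)
next
  case (nnp_step S c j)
  have "nnp Q (\<lambda>x. S ((Q ^^ k) x) + scaleR c ((Q ^^ (j + k)) x))"
    using nnp_step by (intro nnp.nnp_step) auto
  then show ?case by (simp add: funpow_add)
qed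

lemma nnp_comp: "clin Q \<Longrightarrow> nnp Q S \<Longrightarrow> nnp Q R \<Longrightarrow> nnp Q (\<lambda>x. S (R x))"
proof -
  assume c: "clin Q" and s: "nnp Q S" and r: "nnp Q R"
  have cs: "clin S" by (rule nnp_clin[OF c s])
  show ?thesis using r
  proof (induction rule: nnp.induct)
    case nnp_zero then show ?case using clin_zero[OF cs] by (simp add: nnp.nnp_zero)
  next
    case (nnp_step R c k)
    have "nnp Q (\<lambda>x. S (R x) + scaleR c (S ((Q ^^ k) x)))"
      by (intro nnp_add nnp_step nnp_scale nnp_comp_pow s)
    then show ?case by (simp add: clin_add[OF cs] clin_scaleR[OF cs])
  qed
qed

lemma nnp_comm_pow: assumes cQ: "clin Q" and "nnp Q S" shows "S ((Q ^^ k) x) = (Q ^^ k) (S x)"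
  using assms(2)
proof (induction arbitrary: x rule: nnp.induct)
  case nnp_zero then show ?case using clin_zero[OF clin_funpow[OF cQ]] by simp
next
  case (nnp_step S c j)
  have cl: "clin (Q ^^ k)" by (rule clin_funpow[OF cQ])
  have "(Q ^^ j) ((Q ^^ k) x) = (Q ^^ k) ((Q ^^ j) x)"
    by (metis add.commute comp_apply funpow_add)
  then show ?case using nnp_step.IH
    by (simp add: clin_add[OF cl] clin_scaleR[OF cl])
qed

lemma nnp_comm: "clin Q \<Longrightarrow> nnp Q S \<Longrightarrow> nnp Q R \<Longrightarrow> S (R x) = R (S x)"
proof -
  assume c: "clin Q" and s: "nnp Q S" and r: "nnp Q R"
  have cs: "clin S" by (rule nnp_clin[OF c s])
  show ?thesis using r
  proof (induction arbitrary: x rule: nnp.induct)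
    case nnp_zero then show ?case using clin_zero[OF cs] by simp
  next
    case (nnp_step R d k)
    then show ?case by (simp add: clin_add[OF cs] clin_scaleR[OF cs] nnp_comm_pow[OF c s])
  qed
qed

lemma cancel_aux:
  fixes u c :: real
  assumes "0 \<le> u" "0 \<le> c" "u * u \<le> c * u" shows "u \<le> c"
proof (cases "u = 0")
  case True then show ?thesis using assms by simp
next
  case False then have "u > 0" using assms by simp
  then show ?thesis using assms(3) by (simp add: mult_le_cancel_right)
qed

lemma pos_norm_bound:
  assumes c: "clin D" and p: "pos D" and B: "\<And>y. norm (D y) \<le> B * norm y" and B0: "0 \<le> B"
  shows "(norm (D x))^2 \<le> B * Re (cinner (D x) x)"
proof -
  have g: "(cmod (cinner (D x) (D x)))^2 \<le> Re (cinner (D x) x) * Re (cinner (D (D x)) (D x))"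
    by (rule gen_cs[OF c p])
  have e: "cmod (cinner (D x) (D x)) = (norm (D x))^2" by (simp add: cinner_self norm_power)
  have r0: "0 \<le> Re (cinner (D x) x)" using p by (simp add: pos_def)
  have "Re (cinner (D (D x)) (D x)) \<le> cmod (cinner (D (D x)) (D x))" by (rule complex_Re_le_cmod)
  also have "\<dots> \<le> norm (D (D x)) * norm (D x)" by (rule cauchy_schwarz)
  also have "\<dots> \<le> B * norm (D x) * norm (D x)" using B[of "D x"] by (simp add: mult_right_mono)
  finally have "Re (cinner (D (D x)) (D x)) \<le> B * (norm (D x))^2" by (simp add: power2_eq_square mult_ac)
  then have m: "Re (cinner (D x) x) * Re (cinner (D (D x)) (D x)) \<le> Re (cinner (D x) x) * (B * (norm (D x))^2)"
    using r0 by (rule mult_left_mono)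
  have "(norm (D x))^2 * (norm (D x))^2 \<le> Re (cinner (D x) x) * Re (cinner (D (D x)) (D x))"
    using g unfolding e by (simp add: power2_eq_square)
  then have "(norm (D x))^2 * (norm (D x))^2 \<le> Re (cinner (D x) x) * (B * (norm (D x))^2)"
    using m by (rule order_trans)
  then have "(norm (D x))^2 * (norm (D x))^2 \<le> (B * Re (cinner (D x) x)) * (norm (D x))^2"
    by (simp add: mult_ac)
  then show ?thesis
    by (rule cancel_aux[OF zero_le_power2 mult_nonneg_nonneg[OF B0 r0]])
qed

definition qok :: "('a::chilbert \<Rightarrow> 'a) \<Rightarrow> bool" where
  "qok Q \<longleftrightarrow> clin Q \<and> pos Q \<and> (\<forall>x. Re (cinner (Q x) x) \<le> (norm x)^2)"

lemma qok_norm: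
  assumes "qok Q" shows "norm (Q x) \<le> norm x"
proof -
  have c: "clin Q" and p: "pos Q" and b: "\<And>x. Re (cinner (Q x) x) \<le> (norm x)^2"
    using assms by (auto simp: qok_def)
  have g: "(cmod (cinner (Q x) (Q x)))^2 \<le> Re (cinner (Q x) x) * Re (cinner (Q (Q x)) (Q x))"
    by (rule gen_cs[OF c p])
  have e: "cmod (cinner (Q x) (Q x)) = (norm (Q x))^2" by (simp add: cinner_self norm_power)
  have r0: "0 \<le> Re (cinner (Q (Q x)) (Q x))" using p by (simp add: pos_def)
  have "(norm (Q x))^2 * (norm (Q x))^2 \<le> (norm x)^2 * (norm (Q x))^2"
  proof -
    have "(norm (Q x))^2 * (norm (Q x))^2 \<le> Re (cinner (Q x) x) * Re (cinner (Q (Q x)) (Q x))"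
      using g e by (simp add: power2_eq_square)
    also have "\<dots> \<le> (norm x)^2 * (norm (Q x))^2"
      by (rule mult_mono[OF b[of x] b[of "Q x"] zero_le_power2 r0])
    finally show ?thesis .
  qed
  then have "(norm (Q x))^2 \<le> (norm x)^2"
    by (rule cancel_aux[OF zero_le_power2 zero_le_power2])
  then show ?thesis by (rule power2_le_imp_le) simp
qed

fun sqit :: "('a::chilbert \<Rightarrow> 'a) \<Rightarrow> nat \<Rightarrow> 'a \<Rightarrow> 'a" where
  "sqit Q 0 = (\<lambda>x. 0)"
| "sqit Q (Suc n) = (\<lambda>x. scaleR (1/2) (Q x + sqit Q n (sqit Q n x)))"

lemma sqit_nnp:
  assumes c: "clin Q"
  shows "nnp Q (sqit Q n) \<and> nnp Q (\<lambda>x. sqit Q (Suc n) x - sqit Q n x)"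
proof (induction n)
  case 0
  have "nnp Q (\<lambda>x. 0 + scaleR (1/2) ((Q ^^ 1) x))" by (intro nnp_step nnp_zero) auto
  then show ?case by (simp add: nnp_zero)
next
  case (Suc n)
  define Y where "Y = sqit Q n"
  define Y' where "Y' = sqit Q (Suc n)"
  define D where "D = (\<lambda>x. Y' x - Y x)"
  have nY: "nnp Q Y" and nD: "nnp Q D" using Suc by (auto simp: Y_def D_def Y'_def)
  have Y'eq: "Y' = (\<lambda>x. Y x + D x)" by (rule ext) (simp add: D_def)
  have nY': "nnp Q Y'" unfolding Y'eq by (rule nnp_add[OF nD nY])
  define E where "E = (\<lambda>x. Y' x + Y x)"
  have nE: "nnp Q E" unfolding E_def by (rule nnp_add[OF nY nY'])
  have cY: "clin Y" and cY': "clin Y'" using nnp_clin[OF c] nY nY' by auto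
  have comm: "Y' (Y x) = Y (Y' x)" for x
    by (rule nnp_comm[OF c nY' nY])
  have Y'x: "Y' x = scaleR (1/2) (Q x + Y (Y x))" for x by (simp add: Y'_def Y_def)
  have Y''x: "sqit Q (Suc (Suc n)) x = scaleR (1/2) (Q x + Y' (Y' x))" for x
    by (simp only: sqit.simps(2)[of Q "Suc n"] Y'_def)
  have "(\<lambda>x. sqit Q (Suc (Suc n)) x - sqit Q (Suc n) x) = (\<lambda>x. scaleR (1/2) (D (E x)))"
  proof (rule ext)
    fix x
    have "D (E x) = Y' (Y' x) - Y (Y x)"
      unfolding D_def E_def
      using comm[of x] by (simp add: clin_add[OF cY] clin_add[OF cY'] algebra_simps)
    moreover have "sqit Q (Suc (Suc n)) x - sqit Q (Suc n) x
        = scaleR (1/2) (Y' (Y' x) - Y (Y x))"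
      unfolding Y''x Y'_def[symmetric] Y'x by (simp add: algebra_simps)
    ultimately show "sqit Q (Suc (Suc n)) x - sqit Q (Suc n) x = scaleR (1/2) (D (E x))" by simp
  qed
  moreover have "nnp Q (\<lambda>x. scaleR (1/2) (D (E x)))"
    by (intro nnp_scale nnp_comp[OF c nD nE]) simp
  ultimately show ?case using nY' by (simp add: Y'_def)
qed

lemma sqit_bound:
  assumes "qok Q" shows "norm (sqit Q n x) \<le> norm x"
proof (induction n arbitrary: x)
  case 0 then show ?case by simp
next
  case (Suc n)
  have "norm (sqit Q (Suc n) x) = (1/2) * norm (Q x + sqit Q n (sqit Q n x))" by simp
  also have "\<dots> \<le> (1/2) * (norm (Q x) + norm (sqit Q n (sqit Q n x)))"
    by (intro mult_left_mono norm_triangle_ineq) auto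
  also have "\<dots> \<le> (1/2) * (norm x + norm x)"
    using qok_norm[OF assms, of x] Suc[of "sqit Q n x"] Suc[of x] by (intro mult_left_mono) auto
  finally show ?case by simp
qed

lemma sqit_clin: "clin Q \<Longrightarrow> clin (sqit Q n)"
  using sqit_nnp nnp_clin by blast

lemma sqit_mono:
  assumes c: "clin Q" and p: "pos Q" and nm: "n \<le> m"
  shows "pos (\<lambda>x. sqit Q m x - sqit Q n x)"
proof -
  obtain k where m: "m = n + k" using nm le_Suc_ex by blast
  have "pos (\<lambda>x. sqit Q (n + k) x - sqit Q n x)"
  proof (induction k)
    case 0 then show ?case by (simp add: pos_def)
  next
    case (Suc k)
    have pD: "pos (\<lambda>x. sqit Q (Suc (n + k)) x - sqit Q (n + k) x)"
      using nnp_pos[OF c p] sqit_nnp[OF c, of "n + k"] by blast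
    have "pos (\<lambda>x. (sqit Q (n + k) x - sqit Q n x) + (sqit Q (Suc (n + k)) x - sqit Q (n + k) x))"
      by (rule pos_add[OF Suc pD])
    then show ?case by simp
  qed
  then show ?thesis by (simp add: m)
qed

lemma clin_diff_fun: "clin A \<Longrightarrow> clin B \<Longrightarrow> clin (\<lambda>x. A x - B x)"
  by (simp add: clin_def algebra_simps scaleC_add_right diff_conv_add_uminus scaleC_minus1[symmetric] scaleC_scaleC mult.commute)

lemma sqit_cauchy:
  assumes q: "qok Q" shows "Cauchy (\<lambda>n. sqit Q n x)"
proof -
  have c: "clin Q" and p: "pos Q" using q by (auto simp: qok_def)
  define r where "r n = Re (cinner (sqit Q n x) x)" for n
  have est: "(norm (sqit Q m x - sqit Q n x))^2 \<le> 2 * (r m - r n)" if "n \<le> m" for m n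
  proof -
    define D where "D = (\<lambda>x. sqit Q m x - sqit Q n x)"
    have cD: "clin D" unfolding D_def by (intro clin_diff_fun sqit_clin c)
    have pD: "pos D" unfolding D_def by (rule sqit_mono[OF c p that])
    have bD: "norm (D y) \<le> 2 * norm y" for y
    proof -
      have "norm (D y) \<le> norm (sqit Q m y) + norm (sqit Q n y)" unfolding D_def by (rule norm_triangle_ineq4)
      also have "\<dots> \<le> 2 * norm y" using sqit_bound[OF q, of m y] sqit_bound[OF q, of n y] by simp
      finally show ?thesis .
    qed
    have "(norm (D x))^2 \<le> 2 * Re (cinner (D x) x)" by (rule pos_norm_bound[OF cD pD bD]) simp
    then show ?thesis by (simp add: D_def r_def cinner_diff_left)
  qed
  have inc: "incseq r"
  proof (rule incseq_SucI)
    fix n have "0 \<le> (norm (sqit Q (Suc n) x - sqit Q n x))^2" by (rule zero_le_power2)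
    moreover have "(norm (sqit Q (Suc n) x - sqit Q n x))^2 \<le> 2 * (r (Suc n) - r n)" by (rule est) simp
    ultimately have "0 \<le> 2 * (r (Suc n) - r n)" by (rule order_trans)
    then show "r n \<le> r (Suc n)" by simp
  qed
  have bnd: "r n \<le> (norm x)^2" for n
  proof -
    have "r n \<le> cmod (cinner (sqit Q n x) x)" unfolding r_def by (rule complex_Re_le_cmod)
    also have "\<dots> \<le> norm (sqit Q n x) * norm x" by (rule cauchy_schwarz)
    also have "\<dots> \<le> norm x * norm x" using sqit_bound[OF q, of n x] by (simp add: mult_right_mono)
    finally show ?thesis by (simp add: power2_eq_square)
  qed
  obtain L where "r \<longlonglongrightarrow> L" using incseq_convergent[OF inc] bnd by blast
  then have cr: "Cauchy r" by (rule LIMSEQ_imp_Cauchy)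
  show ?thesis
  proof (rule metric_CauchyI)
    fix e :: real assume e: "e > 0"
    then have "e^2 / 2 > 0" by simp
    then obtain M where M: "\<And>m n. m \<ge> M \<Longrightarrow> n \<ge> M \<Longrightarrow> dist (r m) (r n) < e^2 / 2"
      using cr unfolding Cauchy_def by blast
    have "dist (sqit Q m x) (sqit Q n x) < e" if "m \<ge> M" "n \<ge> M" for m n
    proof -
      have "(dist (sqit Q m x) (sqit Q n x))^2 < e^2"
      proof (cases "n \<le> m")
        case True
        have "(dist (sqit Q m x) (sqit Q n x))^2 \<le> 2 * (r m - r n)" using est[OF True] by (simp add: dist_norm)
        also have "\<dots> < e^2" using M[OF that] by (simp add: dist_real_def abs_if split: if_splits)
        finally show ?thesis .
      next
        case False
        then have nm: "m \<le> n" by simp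
        have "(dist (sqit Q m x) (sqit Q n x))^2 \<le> 2 * (r n - r m)" using est[OF nm] by (simp add: dist_norm norm_minus_commute)
        also have "\<dots> < e^2" using M[OF that] by (simp add: dist_real_def abs_if split: if_splits)
        finally show ?thesis .
      qed
      then show ?thesis using e by (simp add: power_less_imp_less_base)
    qed
    then show "\<exists>M. \<forall>m\<ge>M. \<forall>n\<ge>M. dist (sqit Q m x) (sqit Q n x) < e" by blast
  qed
qed

definition sqlim :: "('a::chilbert \<Rightarrow> 'a) \<Rightarrow> 'a \<Rightarrow> 'a" where
  "sqlim Q x = lim (\<lambda>n. sqit Q n x)"

lemma sqit_lim: "qok Q \<Longrightarrow> (\<lambda>n. sqit Q n x) \<longlonglongrightarrow> sqlim Q x"
  unfolding sqlim_def using sqit_cauchy Cauchy_convergent_iff convergent_LIMSEQ_iff by blast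

lemma sqlim_clin:
  assumes q: "qok Q" shows "clin (sqlim Q)"
  unfolding clin_def
proof (intro conjI allI)
  have c: "clin Q" using q by (simp add: qok_def)
  fix x y
  have "(\<lambda>n. sqit Q n x + sqit Q n y) \<longlonglongrightarrow> sqlim Q x + sqlim Q y"
    by (intro tendsto_add sqit_lim q)
  moreover have "(\<lambda>n. sqit Q n x + sqit Q n y) = (\<lambda>n. sqit Q n (x + y))"
    by (rule ext) (simp add: clin_add[OF sqit_clin[OF c]])
  ultimately have "(\<lambda>n. sqit Q n (x + y)) \<longlonglongrightarrow> sqlim Q x + sqlim Q y" by simp
  then show "sqlim Q (x + y) = sqlim Q x + sqlim Q y" using sqit_lim[OF q] LIMSEQ_unique by blast
next
  have c: "clin Q" using q by (simp add: qok_def)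
  fix a x
  have "(\<lambda>n. scaleC a (sqit Q n x)) \<longlonglongrightarrow> scaleC a (sqlim Q x)"
    by (rule bounded_linear.tendsto[OF bounded_linear_scaleC sqit_lim[OF q]])
  moreover have "(\<lambda>n. scaleC a (sqit Q n x)) = (\<lambda>n. sqit Q n (scaleC a x))"
    by (rule ext) (simp add: clin_scaleC[OF sqit_clin[OF c]])
  ultimately have "(\<lambda>n. sqit Q n (scaleC a x)) \<longlonglongrightarrow> scaleC a (sqlim Q x)" by simp
  then show "sqlim Q (scaleC a x) = scaleC a (sqlim Q x)" using sqit_lim[OF q] LIMSEQ_unique by blast
qed

lemma sqlim_norm:
  assumes q: "qok Q" shows "norm (sqlim Q x) \<le> norm x"
proof (rule LIMSEQ_le_const2)
  show "(\<lambda>n. norm (sqit Q n x)) \<longlonglongrightarrow> norm (sqlim Q x)" by (intro tendsto_norm sqit_lim q)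
  show "\<exists>N. \<forall>n\<ge>N. norm (sqit Q n x) \<le> norm x" using sqit_bound[OF q] by blast
qed

lemma sqlim_pos:
  assumes q: "qok Q" shows "pos (sqlim Q)"
  unfolding pos_def
proof (intro allI conjI)
  have c: "clin Q" and p: "pos Q" using q by (auto simp: qok_def)
  fix x
  have lim: "(\<lambda>n. cinner (sqit Q n x) x) \<longlonglongrightarrow> cinner (sqlim Q x) x"
    by (intro tendsto_cinner_left sqit_lim q)
  have pn: "pos (sqit Q n)" for n
  proof -
    have "nnp Q (sqit Q n)" using sqit_nnp[OF c, of n] by (rule conjunct1)
    then show ?thesis by (rule nnp_pos[OF c p])
  qed
  have "(\<lambda>n. Im (cinner (sqit Q n x) x)) \<longlonglongrightarrow> Im (cinner (sqlim Q x) x)" by (rule tendsto_Im[OF lim])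
  moreover have "(\<lambda>n. Im (cinner (sqit Q n x) x)) = (\<lambda>n. 0)"
    by (rule ext) (use pn in \<open>simp add: pos_def\<close>)
  ultimately have "(\<lambda>n. 0) \<longlonglongrightarrow> Im (cinner (sqlim Q x) x)" by simp
  then show "Im (cinner (sqlim Q x) x) = 0" by (simp add: LIMSEQ_const_iff)
  show "0 \<le> Re (cinner (sqlim Q x) x)"
  proof (rule LIMSEQ_le_const)
    show "(\<lambda>n. Re (cinner (sqit Q n x) x)) \<longlonglongrightarrow> Re (cinner (sqlim Q x) x)" by (rule tendsto_Re[OF lim])
    show "\<exists>N. \<forall>n\<ge>N. 0 \<le> Re (cinner (sqit Q n x) x)" using pn unfolding pos_def by blast
  qed
qed

lemma sqlim_fix:
  assumes q: "qok Q" shows "sqlim Q x = scaleR (1/2) (Q x + sqlim Q (sqlim Q x))"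
proof -
  have c: "clin Q" using q by (simp add: qok_def)
  define Y where "Y = sqlim Q"
  have l: "\<And>y. (\<lambda>n. sqit Q n y) \<longlonglongrightarrow> Y y" unfolding Y_def by (rule sqit_lim[OF q])
  have a: "(\<lambda>n. sqit Q n (sqit Q n x - Y x)) \<longlonglongrightarrow> 0"
  proof (rule Lim_null_comparison)
    show "\<forall>\<^sub>F n in sequentially. norm (sqit Q n (sqit Q n x - Y x)) \<le> norm (sqit Q n x - Y x)"
      using sqit_bound[OF q] by simp
    show "(\<lambda>n. norm (sqit Q n x - Y x)) \<longlonglongrightarrow> 0"
      using l[of x] by (simp add: tendsto_norm_zero_iff LIM_zero_iff)
  qed
  have b: "(\<lambda>n. sqit Q n (sqit Q n x - Y x) + sqit Q n (Y x)) \<longlonglongrightarrow> 0 + Y (Y x)"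
    by (intro tendsto_add a l)
  have "(\<lambda>n. sqit Q n (sqit Q n x - Y x) + sqit Q n (Y x)) = (\<lambda>n. sqit Q n (sqit Q n x))"
    by (rule ext) (simp add: clin_diff[OF sqit_clin[OF c]])
  then have "(\<lambda>n. sqit Q n (sqit Q n x)) \<longlonglongrightarrow> Y (Y x)" using b by simp
  then have "(\<lambda>n. scaleR (1/2) (Q x + sqit Q n (sqit Q n x))) \<longlonglongrightarrow> scaleR (1/2) (Q x + Y (Y x))"
    by (intro tendsto_intros)
  then have "(\<lambda>n. sqit Q (Suc n) x) \<longlonglongrightarrow> scaleR (1/2) (Q x + Y (Y x))" by simp
  then have "(\<lambda>n. sqit Q n x) \<longlonglongrightarrow> scaleR (1/2) (Q x + Y (Y x))" by (rule LIMSEQ_imp_Suc)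
  then show ?thesis using l[of x] LIMSEQ_unique unfolding Y_def by blast
qed

lemma sqlim_intertwine:
  assumes C: "bounded_clinear C" and q1: "qok Q1" and q2: "qok Q2"
    and i: "\<And>x. C (Q1 x) = Q2 (C x)"
  shows "C (sqlim Q1 x) = sqlim Q2 (C x)"
proof -
  have cC: "clin C" by (rule bounded_clinear_clin[OF C])
  have it: "C (sqit Q1 n y) = sqit Q2 n (C y)" for n y
  proof (induction n arbitrary: y)
    case 0 then show ?case by (simp add: clin_zero[OF cC])
  next
    case (Suc n)
    then show ?case by (simp add: clin_add[OF cC] clin_scaleR[OF cC] i)
  qed
  have "(\<lambda>n. C (sqit Q1 n x)) \<longlonglongrightarrow> C (sqlim Q1 x)"
    by (rule bounded_linear.tendsto[OF bounded_clinear_linear[OF C] sqit_lim[OF q1]])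
  then have "(\<lambda>n. sqit Q2 n (C x)) \<longlonglongrightarrow> C (sqlim Q1 x)" by (simp add: it)
  then show ?thesis using sqit_lim[OF q2] LIMSEQ_unique by blast
qed

definition sroot :: "real \<Rightarrow> ('a::chilbert \<Rightarrow> 'a) \<Rightarrow> 'a \<Rightarrow> 'a" where
  "sroot c P = (\<lambda>x. scaleR (sqrt c) (x - sqlim (\<lambda>y. y - scaleR (1/c) (P y)) x))"

definition cvalid :: "real \<Rightarrow> ('a::chilbert \<Rightarrow> 'a) \<Rightarrow> bool" where
  "cvalid c P \<longleftrightarrow> c > 0 \<and> (\<forall>x. Re (cinner (P x) x) \<le> c * (norm x)^2)"

lemma clin_scaleR_fun: "clin A \<Longrightarrow> clin (\<lambda>x. scaleR r (A x))"
  by (simp add: clin_def scaleR_scaleC scaleC_add_right scaleC_scaleC mult.commute)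

lemma clin_scaleR_diff: "clin A \<Longrightarrow> clin (\<lambda>x. scaleR r (x - A x))"
  by (intro clin_scaleR_fun clin_diff_fun clin_id)

lemma qok_of:
  assumes P: "positive_op P" and cv: "cvalid c P"
  shows "qok (\<lambda>y. y - scaleR (1/c) (P y))"
proof -
  have bP: "bounded_clinear P" and pP: "pos P" using P by (auto simp: positive_op_iff)
  have c0: "c > 0" and cb: "\<And>x. Re (cinner (P x) x) \<le> c * (norm x)^2" using cv by (auto simp: cvalid_def)
  have cl: "clin (\<lambda>y. y - scaleR (1/c) (P y))"
    by (intro clin_diff_fun clin_id clin_scaleR_fun bounded_clinear_clin[OF bP])
  have e: "cinner (y - scaleR (1/c) (P y)) y = cinner y y - complex_of_real (1/c) * cinner (P y) y" for y
    by (simp add: cinner_diff_left cinner_scaleR_left)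
  have r: "Re (cinner (y - scaleR (1/c) (P y)) y) = (norm y)^2 - Re (cinner (P y) y) / c" for y
    unfolding e by (simp add: Re_cinner_self)
  have i: "Im (cinner (y - scaleR (1/c) (P y)) y) = 0" for y
    unfolding e using pP by (simp add: pos_def)
  have r1: "0 \<le> (norm y)^2 - Re (cinner (P y) y) / c" for y
  proof -
    have "Re (cinner (P y) y) / c \<le> (norm y)^2" using cb[of y] c0 by (simp add: divide_le_eq mult.commute)
    then show ?thesis by simp
  qed
  have r2: "(norm y)^2 - Re (cinner (P y) y) / c \<le> (norm y)^2" for y
    using pP c0 by (simp add: pos_def)
  show ?thesis unfolding qok_def pos_def using cl r i r1 r2 by simp
qed

lemma sroot_clin:
  assumes P: "positive_op P" and cv: "cvalid c P"
  shows "clin (sroot c P)"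
  unfolding sroot_def by (intro clin_scaleR_diff sqlim_clin qok_of P cv)

lemma sroot_sq:
  assumes P: "positive_op P" and cv: "cvalid c P"
  shows "sroot c P (sroot c P x) = P x"
proof -
  define Q where "Q = (\<lambda>y. y - scaleR (1/c) (P y))"
  define Y where "Y = sqlim Q"
  have q: "qok Q" unfolding Q_def by (rule qok_of[OF P cv])
  have cY: "clin Y" unfolding Y_def by (rule sqlim_clin[OF q])
  have c0: "c > 0" using cv by (simp add: cvalid_def)
  have h0: "Y x = scaleR (1/2) (Q x + Y (Y x))" using sqlim_fix[OF q, of x] by (simp add: Y_def)
  have "scaleR 2 (Y x) = scaleR 2 (scaleR (1/2) (Q x + Y (Y x)))" using h0 by (rule arg_cong)
  then have h: "scaleR 2 (Y x) = Q x + Y (Y x)" by simp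
  have fix': "Y (Y x) = scaleR 2 (Y x) - Q x" unfolding h by simp
  have S: "sroot c P = (\<lambda>x. scaleR (sqrt c) (x - Y x))" by (simp add: sroot_def Q_def Y_def)
  have "sroot c P (sroot c P x) = scaleR (sqrt c) (scaleR (sqrt c) (x - Y x) - Y (scaleR (sqrt c) (x - Y x)))"
    by (simp add: S)
  also have "\<dots> = scaleR (sqrt c * sqrt c) (x - Y x - (Y x - Y (Y x)))"
    by (simp add: clin_scaleR[OF cY] clin_diff[OF cY] algebra_simps)
  also have "\<dots> = scaleR c (x - Y x - (Y x - Y (Y x)))" using c0 by simp
  also have "x - Y x - (Y x - Y (Y x)) = x - Q x" unfolding fix' by (simp add: algebra_simps scaleR_2)
  also have "scaleR c (x - Q x) = P x" using c0 by (simp add: Q_def)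
  finally show ?thesis .
qed

lemma sroot_positive:
  assumes P: "positive_op P" and cv: "cvalid c P"
  shows "positive_op (sroot c P)"
proof -
  define Q where "Q = (\<lambda>y. y - scaleR (1/c) (P y))"
  define Y where "Y = sqlim Q"
  have q: "qok Q" unfolding Q_def by (rule qok_of[OF P cv])
  have cY: "clin Y" unfolding Y_def by (rule sqlim_clin[OF q])
  have nY: "norm (Y x) \<le> norm x" for x unfolding Y_def by (rule sqlim_norm[OF q])
  have pY: "pos Y" unfolding Y_def by (rule sqlim_pos[OF q])
  have c0: "c > 0" using cv by (simp add: cvalid_def)
  have S: "sroot c P = (\<lambda>x. scaleR (sqrt c) (x - Y x))" by (simp add: sroot_def Q_def Y_def)
  have cS: "clin (sroot c P)" by (rule sroot_clin[OF P cv])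
  have bS: "bounded_clinear (sroot c P)"
  proof (rule bounded_clinear_intro[OF cS])
    fix x
    have "norm (sroot c P x) = sqrt c * norm (x - Y x)" using less_imp_le[OF c0] by (simp add: S)
    also have "\<dots> \<le> sqrt c * (norm x + norm (Y x))" using less_imp_le[OF c0] by (intro mult_left_mono norm_triangle_ineq4) auto
    also have "\<dots> \<le> sqrt c * (norm x + norm x)" using nY[of x] less_imp_le[OF c0] by (intro mult_left_mono) auto
    finally show "norm (sroot c P x) \<le> (2 * sqrt c) * norm x" by simp
  qed
  have "pos (sroot c P)"
    unfolding pos_def
  proof (intro allI conjI)
    fix x
    have e: "cinner (sroot c P x) x = complex_of_real (sqrt c) * (cinner x x - cinner (Y x) x)"
      by (simp add: S cinner_scaleR_left cinner_diff_left)
    show "Im (cinner (sroot c P x) x) = 0" unfolding e using pY by (simp add: pos_def)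
    have "Re (cinner (Y x) x) \<le> cmod (cinner (Y x) x)" by (rule complex_Re_le_cmod)
    also have "\<dots> \<le> norm (Y x) * norm x" by (rule cauchy_schwarz)
    also have "\<dots> \<le> norm x * norm x" using nY[of x] by (simp add: mult_right_mono)
    finally have "Re (cinner (Y x) x) \<le> (norm x)^2" by (simp add: power2_eq_square)
    then show "0 \<le> Re (cinner (sroot c P x) x)" unfolding e using c0 by (simp add: Re_cinner_self)
  qed
  then show ?thesis using bS by (simp add: positive_op_iff)
qed

lemma sroot_intertwine:
  assumes P1: "positive_op P1" and cv1: "cvalid c P1"
    and P2: "positive_op P2" and cv2: "cvalid c P2"
    and C: "bounded_clinear C" and i: "\<And>x. C (P1 x) = P2 (C x)"
  shows "C (sroot c P1 x) = sroot c P2 (C x)"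
proof -
  have cC: "clin C" by (rule bounded_clinear_clin[OF C])
  have q1: "qok (\<lambda>y. y - scaleR (1/c) (P1 y))" by (rule qok_of[OF P1 cv1])
  have q2: "qok (\<lambda>y. y - scaleR (1/c) (P2 y))" by (rule qok_of[OF P2 cv2])
  have ii: "C (sqlim (\<lambda>y. y - scaleR (1/c) (P1 y)) x) = sqlim (\<lambda>y. y - scaleR (1/c) (P2 y)) (C x)"
    by (rule sqlim_intertwine[OF C q1 q2]) (simp add: clin_diff[OF cC] clin_scaleR[OF cC] i)
  show ?thesis unfolding sroot_def by (simp add: clin_diff[OF cC] clin_scaleR[OF cC] ii)
qed

lemma cvalid_exists:
  assumes P: "positive_op P" shows "\<exists>c. cvalid c P"
proof -
  have bP: "bounded_clinear P" using P by (simp add: positive_op_iff)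
  obtain K where K: "K > 0" "\<And>x. norm (P x) \<le> K * norm x" using bounded_clinear_bound[OF bP] by blast
  have "Re (cinner (P x) x) \<le> K * (norm x)^2" for x
  proof -
    have "Re (cinner (P x) x) \<le> cmod (cinner (P x) x)" by (rule complex_Re_le_cmod)
    also have "\<dots> \<le> norm (P x) * norm x" by (rule cauchy_schwarz)
    also have "\<dots> \<le> K * norm x * norm x" using K(2)[of x] by (simp add: mult_right_mono)
    finally show ?thesis by (simp add: power2_eq_square mult.assoc)
  qed
  then show ?thesis using K(1) unfolding cvalid_def by blast
qed

lemma cvalid_mono:
  assumes "cvalid c P" "c \<le> d" shows "cvalid d P"
proof -
  have "c * (norm x)^2 \<le> d * (norm x)^2" for x by (rule mult_right_mono[OF assms(2)]) simp
  then show ?thesis using assms unfolding cvalid_def by (auto intro: order_trans)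
qed

lemma positive_op_herm: "positive_op S \<Longrightarrow> cinner (S x) y = cinner x (S y)"
  using herm_of_pos[of S] bounded_clinear_clin[of S] by (auto simp: positive_op_iff herm_def)

lemma sroot_unique:
  assumes P: "positive_op P" and cv: "cvalid c P" and S': "positive_op S'"
    and sq: "\<And>x. S' (S' x) = P x"
  shows "S' = sroot c P"
proof
  fix x
  define S where "S = sroot c P"
  have pS: "positive_op S" unfolding S_def by (rule sroot_positive[OF P cv])
  have bS: "bounded_clinear S" and bS': "bounded_clinear S'" using pS S' by (auto simp: positive_op_iff)
  have cS: "clin S" and cS': "clin S'" using bS bS' by (auto intro: bounded_clinear_clin)
  have qS: "pos S" and qS': "pos S'" using pS S' by (auto simp: positive_op_iff)
  have SS: "S (S u) = P u" for u unfolding S_def by (rule sroot_sq[OF P cv])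
  have comm: "S' (S u) = S (S' u)" for u
    unfolding S_def by (rule sroot_intertwine[OF P cv P cv bS']) (simp add: sq[symmetric])
  define y where "y = S x - S' x"
  have "S y + S' y = 0"
    by (simp add: y_def clin_diff[OF cS] clin_diff[OF cS'] SS sq comm)
  then have "cinner (S y) y + cinner (S' y) y = 0"
    by (metis cinner_add_left cinner_zero_left)
  then have "Re (cinner (S y) y) + Re (cinner (S' y) y) = 0" by (metis plus_complex.sel(1) zero_complex.sel(1))
  moreover have "0 \<le> Re (cinner (S y) y)" "0 \<le> Re (cinner (S' y) y)" using qS qS' by (auto simp: pos_def)
  ultimately have r: "Re (cinner (S y) y) = 0" "Re (cinner (S' y) y) = 0" by linarith+
  obtain K where K: "K > 0" "\<And>u. norm (S u) \<le> K * norm u" using bounded_clinear_bound[OF bS] by blast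
  obtain K' where K': "K' > 0" "\<And>u. norm (S' u) \<le> K' * norm u" using bounded_clinear_bound[OF bS'] by blast
  have "(norm (S y))^2 \<le> K * Re (cinner (S y) y)" by (rule pos_norm_bound[OF cS qS K(2)]) (use K in simp)
  then have Sy: "S y = 0" using r by simp
  have "(norm (S' y))^2 \<le> K' * Re (cinner (S' y) y)" by (rule pos_norm_bound[OF cS' qS' K'(2)]) (use K' in simp)
  then have S'y: "S' y = 0" using r by simp
  have "cinner y y = cinner (S x) y - cinner (S' x) y" by (simp add: y_def cinner_diff_left)
  also have "\<dots> = cinner x (S y) - cinner x (S' y)" by (simp add: positive_op_herm[OF pS] positive_op_herm[OF S'])
  also have "\<dots> = 0" by (simp add: Sy S'y)
  finally have "y = 0" by (simp add: cinner_eq_zero_iff)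
  then show "S' x = sroot c P x" by (simp add: y_def S_def)
qed

lemma op_sqrt_eq:
  assumes P: "positive_op P" and cv: "cvalid c P"
  shows "op_sqrt P = sroot c P"
  unfolding op_sqrt_def
proof (rule the_equality)
  show "positive_op (sroot c P) \<and> sroot c P \<circ> sroot c P = P"
    using sroot_positive[OF P cv] sroot_sq[OF P cv] by (auto simp: fun_eq_iff)
  fix S assume "positive_op S \<and> S \<circ> S = P"
  then show "S = sroot c P" using sroot_unique[OF P cv, of S] by (auto simp: fun_eq_iff)
qed

lemma bounded_clinear_comp:
  assumes "bounded_clinear A" "bounded_clinear B" shows "bounded_clinear (\<lambda>x. A (B x))"
proof -
  obtain K where K: "K > 0" "\<And>u. norm (A u) \<le> K * norm u" using bounded_clinear_bound[OF assms(1)] by blast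
  obtain K' where K': "K' > 0" "\<And>u. norm (B u) \<le> K' * norm u" using bounded_clinear_bound[OF assms(2)] by blast
  have cA: "clin A" and cB: "clin B" using assms by (auto intro: bounded_clinear_clin)
  show ?thesis
  proof (rule bounded_clinear_intro)
    show "clin (\<lambda>x. A (B x))" using cA cB by (simp add: clin_def)
    fix x
    have "norm (A (B x)) \<le> K * norm (B x)" by (rule K(2))
    also have "\<dots> \<le> K * (K' * norm x)" using K K' by (intro mult_left_mono) auto
    finally show "norm (A (B x)) \<le> (K * K') * norm x" by (simp add: mult.assoc)
  qed
qed

lemma eps_lemma:
  fixes X Y Z :: real
  assumes "\<And>e. e > 0 \<Longrightarrow> X \<le> Y + e * Z" "Z \<ge> 0"
  shows "X \<le> Y"
proof (rule ccontr)
  assume "\<not> X \<le> Y"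
  then have d: "X - Y > 0" by simp
  obtain W where W: "W = Z + 1" by simp
  have W0: "W > 0" using W assms(2) by simp
  define e where "e = ((X - Y) / 2) / W"
  have e0: "e > 0" using d W0 by (simp add: e_def)
  have "e * Z \<le> e * W" using e0 W by simp
  also have "\<dots> = (X - Y) / 2" using W0 by (simp add: e_def)
  finally have "e * Z < X - Y" using d by simp
  then show False using assms(1)[OF e0] by simp
qed

lemma shift_below:
  assumes A: "positive_op A" and e: "e > 0"
  shows "e * norm u \<le> norm (A u + scaleR e u)"
proof -
  have pA: "pos A" using A by (simp add: positive_op_iff)
  have "Re (cinner (A u + scaleR e u) u) = Re (cinner (A u) u) + e * (norm u)^2"
    by (simp add: cinner_add_left cinner_scaleR_left Re_cinner_self)
  moreover have "0 \<le> Re (cinner (A u) u)" using pA by (simp add: pos_def)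
  ultimately have "e * (norm u)^2 \<le> Re (cinner (A u + scaleR e u) u)" by simp
  also have "\<dots> \<le> cmod (cinner (A u + scaleR e u) u)" by (rule complex_Re_le_cmod)
  also have "\<dots> \<le> norm (A u + scaleR e u) * norm u" by (rule cauchy_schwarz)
  finally have h: "(e * norm u) * norm u \<le> norm (A u + scaleR e u) * norm u"
    by (simp add: power2_eq_square mult.assoc)
  show ?thesis
  proof (cases "norm u = 0")
    case True then show ?thesis by simp
  next
    case False then have "norm u > 0" by simp
    then show ?thesis using h by (simp add: mult_le_cancel_right)
  qed
qed

lemma shift_surj:
  fixes A :: "'a::chilbert \<Rightarrow> 'a"
  assumes A: "positive_op A" and e: "e > 0"
  shows "\<exists>w. A w + scaleR e w = v"
proof -
  have bA: "bounded_clinear A" and pA: "pos A" using A by (auto simp: positive_op_iff)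
  have cA: "clin A" by (rule bounded_clinear_clin[OF bA])
  define F where "F = (\<lambda>w. A w + scaleR e w)"
  have cF: "clin F" unfolding F_def
    by (simp add: clin_def clin_add[OF cA] clin_scaleC[OF cA] scaleR_scaleC scaleC_add_right scaleC_scaleC mult.commute)
  obtain K where K: "K > 0" "\<And>u. norm (A u) \<le> K * norm u" using bounded_clinear_bound[OF bA] by blast
  have bF: "bounded_clinear F"
  proof (rule bounded_clinear_intro[OF cF])
    fix u
    have "norm (F u) \<le> norm (A u) + norm (scaleR e u)" unfolding F_def by (rule norm_triangle_ineq)
    also have "\<dots> \<le> K * norm u + e * norm u" using K(2)[of u] e by simp
    finally show "norm (F u) \<le> (K + e) * norm u" by (simp add: algebra_simps)
  qed
  have below: "e * norm u \<le> norm (F u)" for u unfolding F_def by (rule shift_below[OF A e])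
  define R where "R = range F"
  have sub: "csubspace R"
    unfolding csubspace_def R_def
  proof (intro conjI allI impI)
    show "0 \<in> range F" using clin_zero[OF cF] by (metis rangeI)
    fix u v assume "u \<in> range F" "v \<in> range F"
    then show "u + v \<in> range F" by (auto simp: clin_add[OF cF, symmetric])
  next
    fix a u assume "u \<in> range F"
    then show "scaleC a u \<in> range F" by (auto simp: clin_scaleC[OF cF, symmetric])
  qed
  have cl: "closed R"
    unfolding closed_sequential_limits
  proof (intro allI impI, elim conjE)
    fix f l assume fR: "\<forall>n. f n \<in> R" and fl: "f \<longlonglongrightarrow> l"
    have "\<forall>n. \<exists>w. f n = F w" using fR unfolding R_def by blast
    then obtain u where u': "\<forall>n. f n = F (u n)" using choice[of "\<lambda>n w. f n = F w"] by blast
    then have u: "\<And>n. f n = F (u n)" by blast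
    have cf: "Cauchy f" using fl by (rule LIMSEQ_imp_Cauchy)
    have "Cauchy u"
    proof (rule metric_CauchyI)
      fix r :: real assume r: "r > 0"
      then have "e * r > 0" using e by simp
      then obtain M where M: "\<And>m n. m \<ge> M \<Longrightarrow> n \<ge> M \<Longrightarrow> dist (f m) (f n) < e * r"
        using cf unfolding Cauchy_def by blast
      have "dist (u m) (u n) < r" if "m \<ge> M" "n \<ge> M" for m n
      proof -
        have "e * dist (u m) (u n) \<le> norm (F (u m - u n))" unfolding dist_norm by (rule below)
        also have "\<dots> = dist (f m) (f n)" by (simp add: u dist_norm clin_diff[OF cF])
        also have "\<dots> < e * r" by (rule M[OF that])
        finally show ?thesis using e by simp
      qed
      then show "\<exists>M. \<forall>m\<ge>M. \<forall>n\<ge>M. dist (u m) (u n) < r" by blast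
    qed
    then obtain u0 where u0: "u \<longlonglongrightarrow> u0" using Cauchy_convergent_iff convergent_def by blast
    have "(\<lambda>n. F (u n)) \<longlonglongrightarrow> F u0"
      by (rule bounded_linear.tendsto[OF bounded_clinear_linear[OF bF] u0])
    then have "f \<longlonglongrightarrow> F u0" by (simp add: u[abs_def])
    then have "l = F u0" using fl LIMSEQ_unique by blast
    then show "l \<in> R" by (simp add: R_def)
  qed
  obtain m where mR: "m \<in> R" and orth: "\<And>r. r \<in> R \<Longrightarrow> cinner (v - m) r = 0"
    using projection_exists[OF cl sub, of v] by blast
  have "cinner (v - m) (F (v - m)) = 0" using orth by (simp add: R_def)
  then have "cinner (F (v - m)) (v - m) = 0" by (simp add: cinner_commute[of "F (v - m)"])
  moreover have "e * (norm (v - m))^2 \<le> Re (cinner (F (v - m)) (v - m))"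
  proof -
    have "Re (cinner (F (v - m)) (v - m)) = Re (cinner (A (v - m)) (v - m)) + e * (norm (v - m))^2"
      by (simp add: F_def cinner_add_left cinner_scaleR_left Re_cinner_self)
    moreover have "0 \<le> Re (cinner (A (v - m)) (v - m))" using pA by (simp add: pos_def)
    ultimately show ?thesis by simp
  qed
  ultimately have "e * (norm (v - m))^2 \<le> 0" by simp
  then have "(norm (v - m))^2 \<le> 0" using mult_le_cancel_left_pos[OF e, of "(norm (v - m))^2" 0] by simp
  then have "norm (v - m) = 0" by simp
  then have "v = m" by simp
  then show ?thesis using mR by (auto simp: R_def F_def)
qed

lemma shift_positive:
  assumes A: "positive_op A" and e: "e > 0"
  shows "clin (\<lambda>u. A u + scaleR e u)" "pos (\<lambda>u. A u + scaleR e u)"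
proof -
  have bA: "bounded_clinear A" and pA: "pos A" using A by (auto simp: positive_op_iff)
  have cA: "clin A" by (rule bounded_clinear_clin[OF bA])
  show "clin (\<lambda>u. A u + scaleR e u)"
    by (simp add: clin_def clin_add[OF cA] clin_scaleC[OF cA] scaleR_scaleC scaleC_add_right scaleC_scaleC mult.commute)
  show "pos (\<lambda>u. A u + scaleR e u)"
    using pA e by (simp add: pos_def cinner_add_left cinner_scaleR_left Re_cinner_self)
qed

lemma mixed_schwarz:
  fixes T A B :: "'a::chilbert \<Rightarrow> 'a"
  assumes bT: "bounded_clinear T" and A: "positive_op A" and B: "positive_op B"
    and BB: "\<And>u. B (B u) = T (adj T u)" and TA: "\<And>u. T (A u) = B (T u)"
  shows "(cmod (cinner (T x) y))^2 \<le> Re (cinner (A x) x) * Re (cinner (B y) y)"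
proof (rule eps_lemma)
  have cT: "clin T" by (rule bounded_clinear_clin[OF bT])
  have bB: "bounded_clinear B" and pB: "pos B" using B by (auto simp: positive_op_iff)
  have cB: "clin B" by (rule bounded_clinear_clin[OF bB])
  have pA: "pos A" using A by (simp add: positive_op_iff)
  have b0: "0 \<le> Re (cinner (B y) y)" using pB by (simp add: pos_def)
  show "0 \<le> (norm x)^2 * Re (cinner (B y) y)" using b0 by simp
  fix e :: real assume e: "e > 0"
  define Ae where "Ae = (\<lambda>u. A u + scaleR e u)"
  have cAe: "clin Ae" and pAe: "pos Ae" unfolding Ae_def using shift_positive[OF A e] by auto
  have hAe: "herm Ae" by (rule herm_of_pos[OF cAe pAe])
  obtain w where w: "Ae w = adj T y" unfolding Ae_def using shift_surj[OF A e] by blast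
  have h1: "cinner (T x) y = cinner (Ae x) w"
    using hAe by (simp add: adj_prop[OF bT] w[symmetric] herm_def)
  have g: "(cmod (cinner (Ae x) w))^2 \<le> Re (cinner (Ae x) x) * Re (cinner (Ae w) w)"
    by (rule gen_cs[OF cAe pAe])
  have ra: "Re (cinner (Ae x) x) = Re (cinner (A x) x) + e * (norm x)^2"
    by (simp add: Ae_def cinner_add_left cinner_scaleR_left Re_cinner_self)
  define z where "z = T w"
  have e1: "cinner (Ae w) w = cinner y z"
  proof -
    have "cinner (Ae w) w = cnj (cinner w (adj T y))" by (simp add: w cinner_commute[of "adj T y"])
    also have "\<dots> = cnj (cinner (T w) y)" by (simp add: adj_prop[OF bT])
    also have "\<dots> = cinner y z" by (simp add: z_def cinner_commute[of y])
    finally show ?thesis .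
  qed
  have Bz: "B z + scaleR e z = B (B y)"
  proof -
    have "B z + scaleR e z = T (A w) + scaleR e (T w)" by (simp add: z_def TA)
    also have "\<dots> = T (Ae w)" by (simp add: Ae_def clin_add[OF cT] clin_scaleR[OF cT])
    also have "\<dots> = B (B y)" by (simp add: w BB)
    finally show ?thesis .
  qed
  obtain v where v: "B v + scaleR e v = y" using shift_surj[OF B e] by blast
  define d where "d = B y - z"
  have dv: "d = scaleR e (B v)"
  proof -
    define q where "q = d - scaleR e (B v)"
    have "B q + scaleR e q = 0"
    proof -
      have "B q + scaleR e q = (B d + scaleR e d) - scaleR e (B (B v) + scaleR e (B v))"
        by (simp add: q_def clin_diff[OF cB] clin_scaleR[OF cB] algebra_simps)
      also have "B d + scaleR e d = scaleR e (B y)"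
        using Bz by (simp add: d_def clin_diff[OF cB] algebra_simps)
      also have "B (B v) + scaleR e (B v) = B y"
        using v by (metis clin_add[OF cB] clin_scaleR[OF cB])
      finally show ?thesis by simp
    qed
    then have "e * norm q \<le> 0" using shift_below[OF B e, of q] by simp
    then have "norm q \<le> 0" using mult_le_cancel_left_pos[OF e, of "norm q" 0] by simp
    then show ?thesis by (simp add: q_def)
  qed
  have rd: "0 \<le> Re (cinner d y)"
  proof -
    have "cinner d y = complex_of_real e * (cinner (B v) (B v) + complex_of_real e * cinner (B v) v)"
      by (simp add: dv v[symmetric] cinner_scaleR_left cinner_add_right cinner_scaleR_right algebra_simps)
    then have "Re (cinner d y) = e * ((norm (B v))^2 + e * Re (cinner (B v) v))"
      by (simp add: Re_cinner_self)
    moreover have "0 \<le> Re (cinner (B v) v)" using pB by (simp add: pos_def)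
    ultimately show ?thesis using e by simp
  qed
  have "Re (cinner y z) = Re (cinner z y)" by (simp add: cinner_commute[of y])
  also have "\<dots> = Re (cinner (B y) y) - Re (cinner d y)" by (simp add: d_def cinner_diff_left)
  finally have rw: "Re (cinner (Ae w) w) \<le> Re (cinner (B y) y)" using rd e1 by simp
  have a0: "0 \<le> Re (cinner (Ae x) x)" using pAe by (simp add: pos_def)
  have "(cmod (cinner (T x) y))^2 \<le> Re (cinner (Ae x) x) * Re (cinner (Ae w) w)" using g h1 by simp
  also have "\<dots> \<le> Re (cinner (Ae x) x) * Re (cinner (B y) y)" by (rule mult_left_mono[OF rw a0])
  also have "\<dots> = Re (cinner (A x) x) * Re (cinner (B y) y) + e * ((norm x)^2 * Re (cinner (B y) y))"
    by (simp add: ra algebra_simps)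
  finally show "(cmod (cinner (T x) y))^2 \<le> Re (cinner (A x) x) * Re (cinner (B y) y) + e * ((norm x)^2 * Re (cinner (B y) y))" .
qed

lemma final_ineq:
  fixes A B :: "'a::chilbert \<Rightarrow> 'a"
  assumes A: "positive_op A" and B: "positive_op B" and x1: "norm x = 1"
    and t: "(cmod t)^2 \<le> Re (cinner (A x) x) * Re (cinner (B x) x)"
  shows "cmod (cinner (A (B x)) x - cinner (A x) x * cinner (B x) x)
         \<le> norm (A x) * norm (B x) - (cmod t)^2"
proof -
  have pA: "pos A" and pB: "pos B" using A B by (auto simp: positive_op_iff)
  define a where "a = Re (cinner (A x) x)"
  define b where "b = Re (cinner (B x) x)"
  define \<alpha> where "\<alpha> = norm (A x)"
  define \<beta> where "\<beta> = norm (B x)"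
  have Ax: "cinner (A x) x = complex_of_real a" using pA by (simp add: a_def pos_def complex_eq_iff)
  have Bx: "cinner (B x) x = complex_of_real b" using pB by (simp add: b_def pos_def complex_eq_iff)
  have xA: "cinner x (A x) = complex_of_real a" using Ax by (simp add: cinner_commute[of x])
  have xB: "cinner x (B x) = complex_of_real b" using Bx by (simp add: cinner_commute[of x])
  have xx: "cinner x x = 1" using x1 by (simp add: cinner_self)
  have ABx: "cinner (A (B x)) x = cinner (B x) (A x)" by (rule positive_op_herm[OF A])
  define u where "u = A x - scaleR a x"
  define v where "v = B x - scaleR b x"
  have vu: "cinner v u = cinner (B x) (A x) - complex_of_real (a * b)"
    by (simp add: u_def v_def cinner_diff_left cinner_diff_right cinner_scaleR_left cinner_scaleR_right
        Ax Bx xA xB xx algebra_simps)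
  have uu: "(norm u)^2 = \<alpha>^2 - a^2"
  proof -
    have "cinner u u = cinner (A x) (A x) - complex_of_real (a * a)"
      by (simp add: u_def cinner_diff_left cinner_diff_right cinner_scaleR_left cinner_scaleR_right
          Ax xA xx algebra_simps)
    then have "complex_of_real ((norm u)^2) = complex_of_real (\<alpha>^2 - a^2)"
      by (simp add: cinner_self \<alpha>_def power2_eq_square)
    then show ?thesis by (simp only: of_real_eq_iff)
  qed
  have vv: "(norm v)^2 = \<beta>^2 - b^2"
  proof -
    have "cinner v v = cinner (B x) (B x) - complex_of_real (b * b)"
      by (simp add: v_def cinner_diff_left cinner_diff_right cinner_scaleR_left cinner_scaleR_right
          Bx xB xx algebra_simps)
    then have "complex_of_real ((norm v)^2) = complex_of_real (\<beta>^2 - b^2)"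
      by (simp add: cinner_self \<beta>_def power2_eq_square)
    then show ?thesis by (simp only: of_real_eq_iff)
  qed
  have a0: "0 \<le> a" using pA by (simp add: a_def pos_def)
  have b0: "0 \<le> b" using pB by (simp add: b_def pos_def)
  have a\<alpha>: "a \<le> \<alpha>"
  proof -
    have "a \<le> cmod (cinner (A x) x)" unfolding a_def by (rule complex_Re_le_cmod)
    also have "\<dots> \<le> norm (A x) * norm x" by (rule cauchy_schwarz)
    finally show ?thesis by (simp add: x1 \<alpha>_def)
  qed
  have b\<beta>: "b \<le> \<beta>"
  proof -
    have "b \<le> cmod (cinner (B x) x)" unfolding b_def by (rule complex_Re_le_cmod)
    also have "\<dots> \<le> norm (B x) * norm x" by (rule cauchy_schwarz)
    finally show ?thesis by (simp add: x1 \<beta>_def)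
  qed
  have ab: "a * b \<le> \<alpha> * \<beta>" using a0 b0 a\<alpha> b\<beta> by (intro mult_mono) auto
  have "cmod (cinner (A (B x)) x - cinner (A x) x * cinner (B x) x) = cmod (cinner v u)"
    by (simp add: ABx Ax Bx vu)
  also have "\<dots> \<le> norm v * norm u" by (rule cauchy_schwarz)
  also have "\<dots> \<le> \<alpha> * \<beta> - a * b"
  proof (rule power2_le_imp_le)
    have id: "(\<alpha> * \<beta> - a * b)^2 - (\<beta>^2 - b^2) * (\<alpha>^2 - a^2) = (\<alpha> * b - a * \<beta>)^2"
      by (simp add: power2_eq_square algebra_simps)
    have "(norm v * norm u)^2 = (\<beta>^2 - b^2) * (\<alpha>^2 - a^2)" by (simp add: power_mult_distrib uu vv)
    also have "\<dots> \<le> (\<alpha> * \<beta> - a * b)^2" using id zero_le_power2[of "\<alpha> * b - a * \<beta>"] by linarith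
    finally show "(norm v * norm u)^2 \<le> (\<alpha> * \<beta> - a * b)^2" .
    show "0 \<le> \<alpha> * \<beta> - a * b" using ab by simp
  qed
  also have "\<dots> \<le> \<alpha> * \<beta> - (cmod t)^2" using t by (simp add: a_def b_def)
  finally show ?thesis by (simp add: \<alpha>_def \<beta>_def)
qed

theorem theorem4p1:
  fixes T :: "'a::chilbert \<Rightarrow> 'a" and x :: 'a
  assumes "bounded_clinear T"
    and "norm x = 1"
  shows "cmod (cinner (op_abs T (op_abs (adj T) x)) x
               - cinner (op_abs T x) x * cinner (op_abs (adj T) x) x)
         \<le> norm (op_abs T x) * norm (op_abs (adj T) x) - (cmod (cinner (T x) x))^2"
proof -
  have bT: "bounded_clinear T" by fact
  have bTs: "bounded_clinear (adj T)" by (rule adj_bounded[OF bT])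
  define P1 where "P1 = adj T \<circ> T"
  define P2 where "P2 = T \<circ> adj T"
  have P1p: "positive_op P1"
    unfolding positive_op_iff
  proof
    show "bounded_clinear P1" unfolding P1_def o_def by (rule bounded_clinear_comp[OF bTs bT])
    have e: "cinner (P1 u) u = cinner (T u) (T u)" for u
    proof -
      have "cinner (P1 u) u = cnj (cinner u (adj T (T u)))" by (simp add: P1_def cinner_commute[of "adj T (T u)"])
      also have "\<dots> = cnj (cinner (T u) (T u))" by (simp add: adj_prop[OF bT])
      also have "\<dots> = cinner (T u) (T u)" by (simp add: cinner_self)
      finally show ?thesis .
    qed
    show "pos P1" by (simp add: pos_def e cinner_ge_zero)
  qed
  have P2p: "positive_op P2"
    unfolding positive_op_iff
  proof
    show "bounded_clinear P2" unfolding P2_def o_def by (rule bounded_clinear_comp[OF bT bTs])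
    have e: "cinner (P2 u) u = cinner (adj T u) (adj T u)" for u
      by (simp add: P2_def adj_prop[OF bT])
    show "pos P2" by (simp add: pos_def e cinner_ge_zero)
  qed
  obtain c1 where c1: "cvalid c1 P1" using cvalid_exists[OF P1p] by blast
  obtain c2 where c2: "cvalid c2 P2" using cvalid_exists[OF P2p] by blast
  define c where "c = max c1 c2"
  have cv1: "cvalid c P1" by (rule cvalid_mono[OF c1]) (simp add: c_def)
  have cv2: "cvalid c P2" by (rule cvalid_mono[OF c2]) (simp add: c_def)
  define A where "A = sroot c P1"
  define B where "B = sroot c P2"
  have opA: "op_abs T = A" unfolding op_abs_def A_def P1_def[symmetric] by (rule op_sqrt_eq[OF P1p cv1])
  have opB: "op_abs (adj T) = B"
    unfolding op_abs_def B_def adj_adj[OF bT] P2_def[symmetric] by (rule op_sqrt_eq[OF P2p cv2])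
  have pA: "positive_op A" unfolding A_def by (rule sroot_positive[OF P1p cv1])
  have pB: "positive_op B" unfolding B_def by (rule sroot_positive[OF P2p cv2])
  have BB: "B (B u) = T (adj T u)" for u
  proof -
    have "B (B u) = P2 u" unfolding B_def by (rule sroot_sq[OF P2p cv2])
    then show ?thesis by (simp add: P2_def)
  qed
  have TA: "T (A u) = B (T u)" for u
    unfolding A_def B_def by (rule sroot_intertwine[OF P1p cv1 P2p cv2 bT]) (simp add: P1_def P2_def)
  have ms: "(cmod (cinner (T x) x))^2 \<le> Re (cinner (A x) x) * Re (cinner (B x) x)"
    by (rule mixed_schwarz[OF bT pA pB BB TA])
  show ?thesis unfolding opA opB by (rule final_ineq[OF pA pB assms(2) ms])
qed

end
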